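(* Let $r\le n-1$ and let $P=P(m_1,\dots,m_{n-1})$ be a natural unit interval order with $m_1=\cdots=m_{r-1}=r$ and $m_r=\cdots=m_{n-1}=n$, and let $G=\mathrm{inc}(P)$. Then $$X_G(\mathbf{x},t)=\sum_{\ell=0}^{\min\{n-r,r-1\}}t^\ell\,[n-r]_t!\,[r-1]_t!\,[n-2\ell]_t\,e_{(n-\ell,\ell)}.$$
   Context: A natural unit interval order $P(m_1,\dots,m_{n-1})$ is defined for integers $m_1\le\cdots\le m_{n-1}\le n$ with $m_i\ge i$: it is the poset on $[n]$ with $i<_P j$ iff $i<n$ and $j\in\{m_i+1,\dots,n\}$. Its incomparability graph has vertex set $[n]$ and an edge $\{i,j\}$ ($i<j$) iff $j\le m_i$. The chromatic quasisymmetric function of a graph $G$ on $V\subset\mathbb{P}$ is $X_G(\mathbf{x},t)=\sum_\kappa t^{\mathrm{asc}(\kappa)}\prod_v x_{\kappa(v)}$ over proper colorings $\kappa:V\to\mathbb{P}$, with $\mathrm{asc}(\kappa)$ the number of edges $\{i,j\}$, $i<j$, with $\kappa(i)<\kappa(j)$. $[m]_t=1+t+\cdots+t^{m-1}$, $[m]_t!=[1]_t\cdots[m]_t$, $[0]_t!=1$; $e_{(n,0)}=e_n$ and $e_\lambda$ denotes elementary symmetric functions. *)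

theory Defs
  imports Main "HOL-Computational_Algebra.Polynomial"
begin

text \<open>Incomparability graph of the natural unit interval order P(m_1,...,m_{n-1}) on [n]:
  edge {i,j} with i<j iff j <= m_i (only i < n have an m_i).\<close>
definition nuio_edge :: "nat \<Rightarrow> (nat \<Rightarrow> nat) \<Rightarrow> nat \<Rightarrow> nat \<Rightarrow> bool" where
  "nuio_edge n m i j \<longleftrightarrow> 1 \<le> i \<and> i < j \<and> j \<le> n \<and> i < n \<and> j \<le> m i"

text \<open>Proper colorings kappa : [n] -> positive integers (extended by 0 outside [n])
  whose monomial prod_v x_{kappa v} equals x^alpha.\<close>
definition colorings_of_type :: "nat \<Rightarrow> (nat \<Rightarrow> nat) \<Rightarrow> (nat \<Rightarrow> nat) \<Rightarrow> (nat \<Rightarrow> nat) set" where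
  "colorings_of_type n m alpha = {\<kappa>.
      (\<forall>v. v \<in> {1..n} \<longrightarrow> 1 \<le> \<kappa> v) \<and> (\<forall>v. v \<notin> {1..n} \<longrightarrow> \<kappa> v = 0) \<and>
      (\<forall>i j. nuio_edge n m i j \<longrightarrow> \<kappa> i \<noteq> \<kappa> j) \<and>
      (\<forall>c. 1 \<le> c \<longrightarrow> card {v \<in> {1..n}. \<kappa> v = c} = alpha c)}"

definition asc :: "nat \<Rightarrow> (nat \<Rightarrow> nat) \<Rightarrow> (nat \<Rightarrow> nat) \<Rightarrow> nat" where
  "asc n m \<kappa> = card {(i, j). nuio_edge n m i j \<and> \<kappa> i < \<kappa> j}"

text \<open>Coefficient of x^alpha in the chromatic quasisymmetric function X_G(x,t),
  a polynomial in t.\<close>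
definition csf_coeff :: "nat \<Rightarrow> (nat \<Rightarrow> nat) \<Rightarrow> (nat \<Rightarrow> nat) \<Rightarrow> int poly" where
  "csf_coeff n m alpha = (\<Sum>\<kappa> \<in> colorings_of_type n m alpha. monom 1 (asc n m \<kappa>))"

text \<open>Coefficient of x^alpha in e_lambda = e_{lambda_1} e_{lambda_2} ...: number of
  tuples of finite sets S_k of positive integers with |S_k| = lambda_k such that each
  c >= 1 lies in exactly alpha c of them.\<close>
definition e_coeff :: "nat list \<Rightarrow> (nat \<Rightarrow> nat) \<Rightarrow> nat" where
  "e_coeff lam alpha = card {Ss :: nat set list. length Ss = length lam \<and>
      (\<forall>k < length lam. finite (Ss ! k) \<and> Ss ! k \<subseteq> {1..} \<and> card (Ss ! k) = lam ! k) \<and>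
      (\<forall>c. 1 \<le> c \<longrightarrow> length (filter (\<lambda>S. c \<in> S) Ss) = alpha c)}"

definition qint :: "nat \<Rightarrow> int poly" where
  "qint k = (\<Sum>i<k. monom 1 i)"

definition qfact :: "nat \<Rightarrow> int poly" where
  "qfact k = (\<Prod>i = 1..k. qint i)"

end

theory Submission
  imports Defs
begin

abbreviation T :: "nat \<Rightarrow> int poly" where "T k \<equiv> monom 1 k"

lemma T_mult: "T a * T b = T (a + b)" by (simp add: mult_monom)

lemma qint_Suc: "qint (Suc k) = 1 + T 1 * qint k"
proof -
  have "qint (Suc k) = T 0 + (\<Sum>i<k. T (Suc i))"
    unfolding qint_def by (rule sum.lessThan_Suc_shift)
  also have "(\<Sum>i<k. T (Suc i)) = T 1 * qint k"
    unfolding qint_def sum_distrib_left by (simp add: T_mult)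
  finally show ?thesis by (simp add: one_pCons monom_0)
qed

lemma qint_Suc2: "qint (Suc k) = qint k + T k"
  unfolding qint_def by simp

lemma qint_0[simp]: "qint 0 = 0" unfolding qint_def by simp

definition Sm :: "nat \<Rightarrow> nat \<Rightarrow> int poly" where
  "Sm q k = (\<Sum>j<k. T j * qint (q - 2*j) * of_nat (q choose j))"

definition Hf :: "nat \<Rightarrow> nat \<Rightarrow> int poly" where
  "Hf q a = (if a < q then Sm q (min a (q - 1 - a) + 1) else 0)"

lemma Sm_Suc: "Sm q (Suc k) = Sm q k + T k * qint (q - 2*k) * of_nat (q choose k)"
  unfolding Sm_def by simp

lemma Sm_0[simp]: "Sm q 0 = 0" unfolding Sm_def by simp

lemma Sm_rec_aux: "2 * Suc k \<le> Suc p + 1 \<Longrightarrow>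
  Sm (Suc p) (Suc k) = T k * of_nat (p choose k) + Sm p k + T 1 * Sm p (Suc k)"
proof (induction k)
  case 0
  then show ?case by (simp add: Sm_Suc qint_Suc monom_0 one_pCons)
next
  case (Suc k)
  have p: "p \<ge> 2*k + 2" using Suc.prems by simp
  have IH: "Sm (Suc p) (Suc k) = T k * of_nat (p choose k) + Sm p k + T 1 * Sm p (Suc k)"
    using Suc.IH Suc.prems by simp
  define X where "X = qint (p - 2*k - 2)"
  have e1: "p - 2*k - 1 = Suc (p - 2*k - 2)" using p by arith
  have e2: "p - 2*k = Suc (p - 2*k - 1)" using p by arith
  have Y: "qint (p - 2*k - 1) = 1 + T 1 * X"
    unfolding X_def by (subst e1) (rule qint_Suc)
  have Z: "qint (p - 2*k) = 1 + T 1 * qint (p - 2*k - 1)"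
    by (subst e2) (rule qint_Suc)
  have q1: "Suc p - 2 * Suc k = p - 2*k - 1" by simp
  have q2: "p - 2 * Suc k = p - 2*k - 2" by simp
  have C: "Suc p choose Suc k = (p choose k) + (p choose Suc k)" by simp
  have Tk1: "T (Suc k) = T 1 * T k" by (simp add: T_mult)
  show ?case
    unfolding Sm_Suc[of "Suc p" "Suc k"] IH Sm_Suc[of p "Suc k"] Sm_Suc[of p k] q1 q2 C Z Y
    unfolding X_def[symmetric] Tk1 by (simp add: algebra_simps)
qed

lemma qint_shift: "1 + T 1 * qint d = qint d + T d"
  using qint_Suc[of d] qint_Suc2[of d] by simp

lemma Hf_rec: "Hf (Suc p) a = T a * of_nat (p choose a) + (if a = 0 then 0 else Hf p (a - 1)) + T 1 * Hf p a"
proof (cases "a \<le> p")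
  case False
  then show ?thesis unfolding Hf_def by auto
next
  case ap: True
  define b where "b = p - a"
  have pab: "p = a + b" using ap b_def by simp
  show ?thesis
  proof (cases "a = 0")
    case True
    show ?thesis
    proof (cases "p = 0")
      case True
      then show ?thesis using \<open>a = 0\<close> by (simp add: Hf_def Sm_def monom_0 one_pCons qint_Suc2)
    next
      case False
      then show ?thesis using \<open>a = 0\<close>
        by (simp add: Hf_def Sm_def monom_0 one_pCons qint_Suc)
    qed
  next
    case a0: False
    show ?thesis
    proof (cases "b = 0")
      case True
      then have "a = p" using pab by simp
      then show ?thesis using a0
        by (simp add: Hf_def Sm_def monom_0 one_pCons qint_Suc2 add.commute)
    next
      case b0: False
      define mm where "mm = min a b"
      have rec: "Sm (Suc p) (Suc mm) = T mm * of_nat (p choose mm) + Sm p mm + T 1 * Sm p (Suc mm)"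
        by (rule Sm_rec_aux) (use pab in \<open>simp add: mm_def\<close>)
      have L: "Hf (Suc p) a = Sm (Suc p) (Suc mm)"
        unfolding Hf_def mm_def using ap pab by simp
      consider "a < b" | "a = b" | "b < a" by linarith
      then show ?thesis
      proof cases
        case 1
        have "Hf p (a - 1) = Sm p mm" unfolding Hf_def mm_def using 1 a0 b0 pab by simp
        moreover have "Hf p a = Sm p (Suc mm)" unfolding Hf_def mm_def using 1 a0 b0 pab by simp
        ultimately show ?thesis using L rec a0 1 by (simp add: mm_def)
      next
        case 2
        have "Hf p (a - 1) = Sm p mm" unfolding Hf_def mm_def using 2 a0 b0 pab by simp
        moreover have "Hf p a = Sm p mm" unfolding Hf_def mm_def using 2 a0 b0 pab by simp
        moreover have "Sm p (Suc mm) = Sm p mm" using 2 pab by (simp add: Sm_Suc mm_def)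
        ultimately show ?thesis using L rec a0 2 by (simp add: mm_def)
      next
        case 3
        have h1: "Hf p (a - 1) = Sm p (Suc b)" unfolding Hf_def using 3 a0 b0 pab by simp
        have h2: "Hf p a = Sm p b" proof -
          have "min a (p - 1 - a) + 1 = b" using 3 b0 pab by simp
          then show ?thesis unfolding Hf_def using 3 pab by simp
        qed
        have m: "mm = b" using 3 by (simp add: mm_def)
        have cc: "p choose a = p choose b" using pab binomial_symmetric[of b p] by simp
        have d: "p - 2*b = a - b" using pab by simp
        have d2: "p - b*2 = a - b" using pab by simp
        have ab: "a = b + (a - b)" using 3 by simp
        have key: "T b + T 1 * (T b * qint (a - b)) = T a + T b * qint (a - b)"
        proof -
          have "T b + T 1 * (T b * qint (a - b)) = T b * (1 + T 1 * qint (a - b))"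
            by (simp add: algebra_simps)
          also have "\<dots> = T b * (qint (a - b) + T (a - b))" by (simp only: qint_shift)
          also have "\<dots> = T b * qint (a - b) + T a" by (subst (2) ab) (simp add: algebra_simps T_mult)
          finally show ?thesis by simp
        qed
        have "Hf (Suc p) a = T b * of_nat (p choose b) + Sm p b + T 1 * Sm p (Suc b)"
          using L rec m by simp
        also have "\<dots> = (T b + T 1 * (T b * qint (a - b))) * of_nat (p choose b) + Sm p b + T 1 * Sm p b"
          by (simp add: Sm_Suc d d2 algebra_simps)
        also have "\<dots> = (T a + T b * qint (a - b)) * of_nat (p choose b) + Sm p b + T 1 * Sm p b"
          by (simp only: key)
        also have "\<dots> = T a * of_nat (p choose a) + Sm p (Suc b) + T 1 * Sm p b"
          by (simp add: Sm_Suc d d2 cc algebra_simps)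
        finally show ?thesis using h1 h2 a0 by simp
      qed
    qed
  qed
qed



definition st :: "nat set \<Rightarrow> nat \<Rightarrow> nat set \<Rightarrow> nat" where
  "st Q c A = card {x\<in>A. x < c} + card {y \<in> Q - {c} - A. c < y}"

definition G :: "nat set \<Rightarrow> nat \<Rightarrow> int poly" where
  "G Q a = (\<Sum>c\<in>Q. \<Sum>A\<in>{A. A \<subseteq> Q - {c} \<and> card A = a}. T (st Q c A))"

lemma G_rec:
  assumes fin: "finite Q" and ne: "Q \<noteq> {}"
  defines "M \<equiv> Max Q"
  shows "G Q a = T a * of_nat (card (Q - {M}) choose a) + (if a = 0 then 0 else G (Q - {M}) (a - 1))
           + T 1 * G (Q - {M}) a"
proof -
  define Q' where "Q' = Q - {M}"
  have MQ: "M \<in> Q" using fin ne M_def by simp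
  have Mmax: "\<And>x. x \<in> Q \<Longrightarrow> x \<le> M" using fin M_def by simp
  have Qi: "Q = insert M Q'" using MQ Q'_def by auto
  have finQ': "finite Q'" using fin Q'_def by simp
  have MQ': "M \<notin> Q'" using Q'_def by simp
  have lessM: "\<And>x. x \<in> Q' \<Longrightarrow> x < M" using Mmax Q'_def by (metis DiffE insertI1 le_neq_implies_less)
  have t1: "(\<Sum>A\<in>{A. A \<subseteq> Q - {M} \<and> card A = a}. T (st Q M A)) = T a * of_nat (card Q' choose a)"
  proof -
    have "\<And>A. A \<subseteq> Q' \<Longrightarrow> card A = a \<Longrightarrow> st Q M A = a"
    proof -
      fix A assume A: "A \<subseteq> Q'" "card A = a"
      have e1: "{x\<in>A. x < M} = A" using A lessM by auto
      have e2: "{y \<in> Q - {M} - A. M < y} = {}" using Mmax by force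
      show "st Q M A = a" unfolding st_def e1 e2 using A by simp
    qed
    then have "(\<Sum>A\<in>{A. A \<subseteq> Q - {M} \<and> card A = a}. T (st Q M A)) = (\<Sum>A\<in>{A. A \<subseteq> Q' \<and> card A = a}. T a)"
      unfolding Q'_def by (intro sum.cong) auto
    also have "\<dots> = of_nat (card Q' choose a) * T a" using n_subsets[OF finQ', of a] by simp
    finally show ?thesis by (simp add: mult.commute)
  qed
  have t2: "(\<Sum>A\<in>{A. A \<subseteq> Q - {c} \<and> card A = a}. T (st Q c A)) =
      T 1 * (\<Sum>A\<in>{A. A \<subseteq> Q' - {c} \<and> card A = a}. T (st Q' c A))
      + (if a = 0 then 0 else (\<Sum>A\<in>{A. A \<subseteq> Q' - {c} \<and> card A = a - 1}. T (st Q' c A)))"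
    if cQ: "c \<in> Q'" for c
  proof -
    have cM: "c < M" using lessM cQ by simp
    define S1 where "S1 = {A. A \<subseteq> Q' - {c} \<and> card A = a}"
    define S2 where "S2 = {A. A \<subseteq> Q - {c} \<and> card A = a \<and> M \<in> A}"
    have split: "{A. A \<subseteq> Q - {c} \<and> card A = a} = S1 \<union> S2"
      unfolding S1_def S2_def Qi by auto
    have disj: "S1 \<inter> S2 = {}" unfolding S1_def S2_def using MQ' by auto
    have finS: "finite S1" "finite S2" unfolding S1_def S2_def using fin finQ' by auto
    have p1: "(\<Sum>A\<in>S1. T (st Q c A)) = T 1 * (\<Sum>A\<in>S1. T (st Q' c A))"
    proof -
      have "T (st Q c A) = T 1 * T (st Q' c A)" if "A \<in> S1" for A
      proof -
        have AQ: "A \<subseteq> Q' - {c}" using that S1_def by simp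
        have e: "{y \<in> Q - {c} - A. c < y} = insert M {y \<in> Q' - {c} - A. c < y}"
          using AQ cM MQ' cQ unfolding Qi by auto
        have "card {y \<in> Q - {c} - A. c < y} = Suc (card {y \<in> Q' - {c} - A. c < y})"
          unfolding e using finQ' MQ' by (subst card_insert_disjoint) auto
        then have "st Q c A = 1 + st Q' c A" unfolding st_def by simp
        then show ?thesis by (simp add: T_mult)
      qed
      then show ?thesis by (simp add: sum_distrib_left)
    qed
    have p2: "(\<Sum>A\<in>S2. T (st Q c A)) = (if a = 0 then 0 else (\<Sum>A\<in>{A. A \<subseteq> Q' - {c} \<and> card A = a - 1}. T (st Q' c A)))"
    proof (cases "a = 0")
      case True
      have "S2 = {}" unfolding S2_def using True fin by (auto simp: card_eq_0_iff dest: finite_subset)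
      then show ?thesis using True by simp
    next
      case False
      have S2eq: "S2 = insert M ` {A. A \<subseteq> Q' - {c} \<and> card A = a - 1}"
      proof
        show "S2 \<subseteq> insert M ` {A. A \<subseteq> Q' - {c} \<and> card A = a - 1}"
        proof
          fix A assume "A \<in> S2"
          then have A: "A \<subseteq> Q - {c}" "card A = a" "M \<in> A" unfolding S2_def by auto
          have "A - {M} \<subseteq> Q' - {c}" using A Qi by auto
          moreover have "card (A - {M}) = a - 1" using A by simp
          moreover have "A = insert M (A - {M})" using A by auto
          ultimately show "A \<in> insert M ` {A. A \<subseteq> Q' - {c} \<and> card A = a - 1}" by blast
        qed
      next
        show "insert M ` {A. A \<subseteq> Q' - {c} \<and> card A = a - 1} \<subseteq> S2"
        proof
          fix A assume "A \<in> insert M ` {A. A \<subseteq> Q' - {c} \<and> card A = a - 1}"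
          then obtain B where B: "B \<subseteq> Q' - {c}" "card B = a - 1" "A = insert M B" by auto
          have "finite B" using B finQ' finite_subset by blast
          moreover have "M \<notin> B" using B MQ' by auto
          ultimately have "card A = a" using B False by simp
          moreover have "A \<subseteq> Q - {c}" using B(1,3) MQ cM unfolding Q'_def by auto
          ultimately show "A \<in> S2" unfolding S2_def using B(3) by simp
        qed
      qed
      have inj: "inj_on (insert M) {A. A \<subseteq> Q' - {c} \<and> card A = a - 1}"
        proof (rule inj_onI)
        fix x y assume xy: "x \<in> {A. A \<subseteq> Q' - {c} \<and> card A = a - 1}" "y \<in> {A. A \<subseteq> Q' - {c} \<and> card A = a - 1}"
          and e: "insert M x = insert M y"
        have "M \<notin> x" "M \<notin> y" using xy MQ' by auto
        then show "x = y" using e by (metis Diff_insert_absorb)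
      qed
      have stq: "st Q c (insert M B) = st Q' c B" if "B \<subseteq> Q' - {c}" for B
      proof -
        have "{x \<in> insert M B. x < c} = {x\<in>B. x < c}" using cM by auto
        moreover have "Q - {c} - insert M B = Q' - {c} - B" using Qi MQ' by auto
        ultimately show ?thesis unfolding st_def by simp
      qed
      have "(\<Sum>A\<in>S2. T (st Q c A)) = (\<Sum>B\<in>{A. A \<subseteq> Q' - {c} \<and> card A = a - 1}. T (st Q c (insert M B)))"
        unfolding S2eq by (rule sum.reindex[OF inj, unfolded comp_def])
      also have "\<dots> = (\<Sum>B\<in>{A. A \<subseteq> Q' - {c} \<and> card A = a - 1}. T (st Q' c B))"
        by (intro sum.cong) (auto simp: stq)
      finally show ?thesis using False by simp
    qed
    have "(\<Sum>A\<in>{A. A \<subseteq> Q - {c} \<and> card A = a}. T (st Q c A)) = (\<Sum>A\<in>S1. T (st Q c A)) + (\<Sum>A\<in>S2. T (st Q c A))"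
      unfolding split by (rule sum.union_disjoint[OF finS disj])
    then show ?thesis unfolding p1 p2 unfolding S1_def by simp
  qed
  have "G Q a = (\<Sum>A\<in>{A. A \<subseteq> Q - {M} \<and> card A = a}. T (st Q M A))
     + (\<Sum>c\<in>Q'. \<Sum>A\<in>{A. A \<subseteq> Q - {c} \<and> card A = a}. T (st Q c A))"
    unfolding G_def Qi using finQ' MQ' by simp
  also have "(\<Sum>c\<in>Q'. \<Sum>A\<in>{A. A \<subseteq> Q - {c} \<and> card A = a}. T (st Q c A)) =
     T 1 * G Q' a + (if a = 0 then 0 else G Q' (a - 1))"
    unfolding G_def by (simp add: t2 sum.distrib sum_distrib_left)
  finally show ?thesis unfolding t1 Q'_def by simp
qed

lemma G_Hf: "finite Q \<Longrightarrow> G Q a = Hf (card Q) a"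
proof (induction "card Q" arbitrary: Q a)
  case 0
  then have "Q = {}" by simp
  then show ?case by (simp add: G_def Hf_def)
next
  case (Suc p)
  then have ne: "Q \<noteq> {}" by auto
  define M where "M = Max Q"
  have MQ: "M \<in> Q" using Suc.prems ne M_def by simp
  have cq: "card (Q - {M}) = p" using Suc.hyps MQ Suc.prems by simp
  have IH: "\<And>a. G (Q - {M}) a = Hf p a" using Suc.hyps(1)[of "Q - {M}"] cq Suc.prems by simp
  have "G Q a = T a * of_nat (card (Q - {M}) choose a) + (if a = 0 then 0 else G (Q - {M}) (a - 1))
           + T 1 * G (Q - {M}) a" unfolding M_def by (rule G_rec[OF Suc.prems ne])
  also have "\<dots> = Hf (Suc p) a" by (simp only: IH cq Hf_rec)
  finally show ?case using Suc.hyps(2) by simp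
qed



definition cv :: "(nat \<Rightarrow> nat) \<Rightarrow> nat \<Rightarrow> nat \<Rightarrow> nat" where
  "cv f lo hi = card {(i, j). lo \<le> i \<and> i < j \<and> j < hi \<and> f i < f j}"

definition Fb :: "nat \<Rightarrow> nat \<Rightarrow> nat set \<Rightarrow> (nat \<Rightarrow> nat) set" where
  "Fb lo k U = {f. bij_betw f {lo..<lo+k} U \<and> (\<forall>x. x \<notin> {lo..<lo+k} \<longrightarrow> f x = 0)}"

lemma rank_sum:
  fixes U :: "nat set"
  assumes "finite U" "card U = k"
  shows "(\<Sum>x\<in>U. T (card {y\<in>U. x < y})) = qint k"
proof -
  define h where "h x = card {y\<in>U. x < y}" for x
  have inj: "inj_on h U"
  proof (rule inj_onI)
    fix x y assume xy: "x \<in> U" "y \<in> U" "h x = h y"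
    show "x = y"
    proof (rule ccontr)
      assume "x \<noteq> y"
      then have "x < y \<or> y < x" by arith
      then show False
      proof (elim disjE)
        assume 1: "x < y"
        have "{z\<in>U. y < z} \<subset> {z\<in>U. x < z}" using 1 xy by auto
        then have "h y < h x" unfolding h_def by (rule psubset_card_mono[rotated]) (use assms in simp)
        then show False using xy by simp
      next
        assume 2: "y < x"
        have "{z\<in>U. x < z} \<subset> {z\<in>U. y < z}" using 2 xy by auto
        then have "h x < h y" unfolding h_def by (rule psubset_card_mono[rotated]) (use assms in simp)
        then show False using xy by simp
      qed
    qed
  qed
  have sub: "h ` U \<subseteq> {..<k}"
  proof
    fix z assume "z \<in> h ` U"
    then obtain x where x: "x \<in> U" "z = h x" by auto
    have "{y\<in>U. x < y} \<subset> U" using x by auto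
    then have "h x < card U" unfolding h_def by (rule psubset_card_mono[rotated]) (use assms in simp)
    then show "z \<in> {..<k}" using x assms by simp
  qed
  have "card (h ` U) = k" using card_image[OF inj] assms by simp
  then have img: "h ` U = {..<k}" using sub by (simp add: card_subset_eq)
  have bij: "bij_betw h U {..<k}" using inj img by (simp add: bij_betw_def)
  show ?thesis unfolding qint_def h_def[symmetric] by (rule sum.reindex_bij_betw[OF bij])
qed

lemma cv_split:
  assumes "lo < hi"
  shows "cv f lo hi = card {j. lo < j \<and> j < hi \<and> f lo < f j} + cv f (Suc lo) hi"
proof -
  have e: "{(i, j). lo \<le> i \<and> i < j \<and> j < hi \<and> f i < f j} =
     (\<lambda>j. (lo, j)) ` {j. lo < j \<and> j < hi \<and> f lo < f j} \<union> {(i, j). Suc lo \<le> i \<and> i < j \<and> j < hi \<and> f i < f j}"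
    by (auto simp: le_eq_less_or_eq Suc_le_eq)
  have f1: "finite ((\<lambda>j. (lo, j)) ` {j. lo < j \<and> j < hi \<and> f lo < f j})" by simp
  have f2: "finite {(i, j). Suc lo \<le> i \<and> i < j \<and> j < hi \<and> f i < f j}"
    by (rule finite_subset[of _ "{..<hi} \<times> {..<hi}"]) auto
  have d: "(\<lambda>j. (lo, j)) ` {j. lo < j \<and> j < hi \<and> f lo < f j} \<inter> {(i, j). Suc lo \<le> i \<and> i < j \<and> j < hi \<and> f i < f j} = {}"
    by auto
  have "inj (\<lambda>j. (lo::nat, j::nat))" by (simp add: inj_on_def)
  then show ?thesis unfolding cv_def e card_Un_disjoint[OF f1 f2 d]
    by (simp add: card_image inj_on_def)
qed

lemma cv_upd: "lo < lo' \<Longrightarrow> cv (g(lo := x)) lo' hi = cv g lo' hi"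
  unfolding cv_def by (rule arg_cong[where f=card]) auto

lemma Fb_0: "Fb lo 0 {} = {\<lambda>_. 0}"
  unfolding Fb_def by (auto simp: bij_betw_def)

lemma Fb_Suc:
  "Fb lo (Suc k) U = (\<lambda>(x, g). g(lo := x)) ` (SIGMA x:U. Fb (Suc lo) k (U - {x}))"
proof
  show "Fb lo (Suc k) U \<subseteq> (\<lambda>(x, g). g(lo := x)) ` (SIGMA x:U. Fb (Suc lo) k (U - {x}))"
  proof
    fix f assume f: "f \<in> Fb lo (Suc k) U"
    have bij: "bij_betw f {lo..<lo + Suc k} U" and z: "\<And>x. x \<notin> {lo..<lo + Suc k} \<Longrightarrow> f x = 0"
      using f unfolding Fb_def by auto
    have iv: "{lo..<lo + Suc k} = insert lo {Suc lo..<Suc lo + k}" by auto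
    have flo: "f lo \<in> U" using bij unfolding bij_betw_def by auto
    have b2: "bij_betw f {Suc lo..<Suc lo + k} (U - {f lo})"
    proof -
      have "bij_betw f ({lo..<lo + Suc k} - {lo}) (U - {f lo})"
        by (rule bij_betw_DiffI[OF bij]) (auto simp: bij_betw_def flo)
      moreover have "{lo..<lo + Suc k} - {lo} = {Suc lo..<Suc lo + k}" by auto
      ultimately show ?thesis by simp
    qed
    have "f(lo := 0) \<in> Fb (Suc lo) k (U - {f lo})"
      unfolding Fb_def
    proof (intro CollectI conjI allI impI)
      show "bij_betw (f(lo := 0)) {Suc lo..<Suc lo + k} (U - {f lo})"
        using b2 by (rule bij_betw_cong[THEN iffD1, rotated]) auto
      fix x assume "x \<notin> {Suc lo..<Suc lo + k}"
      then show "(f(lo := 0)) x = 0" using z by auto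
    qed
    moreover have "f = (f(lo := 0))(lo := f lo)" by simp
    ultimately show "f \<in> (\<lambda>(x, g). g(lo := x)) ` (SIGMA x:U. Fb (Suc lo) k (U - {x}))"
      using flo by (intro rev_image_eqI[of "(f lo, f(lo:=0))"]) auto
  qed
next
  show "(\<lambda>(x, g). g(lo := x)) ` (SIGMA x:U. Fb (Suc lo) k (U - {x})) \<subseteq> Fb lo (Suc k) U"
  proof
    fix f assume "f \<in> (\<lambda>(x, g). g(lo := x)) ` (SIGMA x:U. Fb (Suc lo) k (U - {x}))"
    then obtain x g where xg: "x \<in> U" "g \<in> Fb (Suc lo) k (U - {x})" "f = g(lo := x)" by auto
    have bij: "bij_betw g {Suc lo..<Suc lo + k} (U - {x})" and z: "\<And>y. y \<notin> {Suc lo..<Suc lo + k} \<Longrightarrow> g y = 0"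
      using xg unfolding Fb_def by auto
    have "bij_betw f {Suc lo..<Suc lo + k} (U - {x}) = bij_betw g {Suc lo..<Suc lo + k} (U - {x})"
      by (rule bij_betw_cong) (simp add: xg(3))
    then have b1: "bij_betw f {Suc lo..<Suc lo + k} (U - {x})" using bij by simp
    have "bij_betw f ({Suc lo..<Suc lo + k} \<union> {lo}) ((U - {x}) \<union> {f lo})"
      by (rule notIn_Un_bij_betw[OF _ _ b1]) (use xg in auto)
    moreover have "{Suc lo..<Suc lo + k} \<union> {lo} = {lo..<lo + Suc k}" by auto
    moreover have "(U - {x}) \<union> {f lo} = U" using xg by auto
    ultimately have "bij_betw f {lo..<lo + Suc k} U" by simp
    moreover have "\<forall>y. y \<notin> {lo..<lo + Suc k} \<longrightarrow> f y = 0" using z xg(3) by auto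
    ultimately show "f \<in> Fb lo (Suc k) U" unfolding Fb_def by simp
  qed
qed

lemma Fb_inj: "inj_on (\<lambda>(x, g). g(lo := x)) (SIGMA x:U. Fb (Suc lo) k (U - {x}))"
proof (rule inj_onI, clarify)
  fix x g y h
  assume g: "g \<in> Fb (Suc lo) k (U - {x})" and h: "h \<in> Fb (Suc lo) k (U - {y})" and e: "g(lo := x) = h(lo := y)"
  have "x = y" using fun_upd_eqD[OF e] by simp
  moreover have "g lo = 0" "h lo = 0" using g h unfolding Fb_def by auto
  ultimately show "x = y \<and> g = h" using e by (metis fun_upd_triv fun_upd_upd)
qed

lemma Fb_finite: "finite U \<Longrightarrow> finite (Fb lo k U)"
proof -
  assume fu: "finite U"
  have "Fb lo k U \<subseteq> {f. (\<forall>x. x \<notin> {lo..<lo+k} \<longrightarrow> f x = 0) \<and> (\<forall>x \<in> {lo..<lo+k}. f x \<in> U)}"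
    unfolding Fb_def bij_betw_def by auto
  moreover have "finite {f. (\<forall>x. x \<notin> {lo..<lo+k} \<longrightarrow> f x = 0) \<and> (\<forall>x \<in> {lo..<lo+k}. f x \<in> U)}"
  proof -
    have "{f. (\<forall>x. x \<notin> {lo..<lo+k} \<longrightarrow> f x = 0) \<and> (\<forall>x \<in> {lo..<lo+k}. f x \<in> U)}
      = {f. \<forall>x. (x \<in> {lo..<lo+k} \<longrightarrow> f x \<in> U) \<and> (x \<notin> {lo..<lo+k} \<longrightarrow> f x = 0)}" by auto
    moreover have "finite {f. \<forall>x. (x \<in> {lo..<lo+k} \<longrightarrow> f x \<in> U) \<and> (x \<notin> {lo..<lo+k} \<longrightarrow> f x = 0)}"
      by (rule finite_set_of_finite_funs) (use fu in auto)
    ultimately show ?thesis by simp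
  qed
  ultimately show ?thesis by (rule finite_subset)
qed

lemma perm_sum:
  "finite U \<Longrightarrow> card U = k \<Longrightarrow> (\<Sum>f\<in>Fb lo k U. T (cv f lo (lo + k))) = qfact k"
proof (induction k arbitrary: lo U)
  case 0
  then have "U = {}" by simp
  then show ?case by (simp add: Fb_0 cv_def qfact_def)
next
  case (Suc k)
  have fin: "\<And>x. finite (Fb (Suc lo) k (U - {x}))" using Suc.prems by (simp add: Fb_finite)
  have cvx: "cv (g(lo := x)) lo (lo + Suc k) = card {y\<in>U. x < y} + cv g (Suc lo) (Suc lo + k)"
    if x: "x \<in> U" and g: "g \<in> Fb (Suc lo) k (U - {x})" for x g
  proof -
    have bij: "bij_betw g {Suc lo..<Suc lo + k} (U - {x})" using g unfolding Fb_def by auto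
    have "card {j. lo < j \<and> j < lo + Suc k \<and> (g(lo := x)) lo < (g(lo := x)) j} = card {j\<in>{Suc lo..<Suc lo + k}. x < g j}"
      by (rule arg_cong[where f=card]) auto
    also have "\<dots> = card (g ` {j\<in>{Suc lo..<Suc lo + k}. x < g j})"
      by (rule card_image[symmetric]) (use bij in \<open>auto simp: bij_betw_def inj_on_def\<close>)
    also have "g ` {j\<in>{Suc lo..<Suc lo + k}. x < g j} = {y\<in>U. x < y}"
    proof
      show "g ` {j\<in>{Suc lo..<Suc lo + k}. x < g j} \<subseteq> {y\<in>U. x < y}"
        using bij unfolding bij_betw_def by auto
      show "{y\<in>U. x < y} \<subseteq> g ` {j\<in>{Suc lo..<Suc lo + k}. x < g j}"
      proof
        fix y assume y: "y \<in> {y\<in>U. x < y}"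
        then have "y \<in> U - {x}" by auto
        then obtain j where "j \<in> {Suc lo..<Suc lo + k}" "y = g j"
          using bij unfolding bij_betw_def by (metis imageE)
        then show "y \<in> g ` {j\<in>{Suc lo..<Suc lo + k}. x < g j}" using y by auto
      qed
    qed
    finally show ?thesis
      using cv_split[of lo "lo + Suc k" "g(lo := x)"] cv_upd[of lo "Suc lo" g x "lo + Suc k"] by simp
  qed
  have "(\<Sum>f\<in>Fb lo (Suc k) U. T (cv f lo (lo + Suc k)))
      = (\<Sum>p\<in>(SIGMA x:U. Fb (Suc lo) k (U - {x})). T (cv ((\<lambda>(x, g). g(lo := x)) p) lo (lo + Suc k)))"
    unfolding Fb_Suc by (rule sum.reindex[OF Fb_inj, unfolded comp_def])
  also have "\<dots> = (\<Sum>(x, g)\<in>(SIGMA x:U. Fb (Suc lo) k (U - {x})). T (cv (g(lo := x)) lo (lo + Suc k)))"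
    by (rule sum.cong) auto
  also have "\<dots> = (\<Sum>x\<in>U. \<Sum>g\<in>Fb (Suc lo) k (U - {x}). T (cv (g(lo := x)) lo (lo + Suc k)))"
    by (rule sum.Sigma[symmetric]) (use Suc.prems fin in auto)
  also have "\<dots> = (\<Sum>x\<in>U. \<Sum>g\<in>Fb (Suc lo) k (U - {x}). T (card {y\<in>U. x < y}) * T (cv g (Suc lo) (Suc lo + k)))"
    by (intro sum.cong refl) (subst cvx, auto simp: T_mult)
  also have "\<dots> = (\<Sum>x\<in>U. T (card {y\<in>U. x < y}) * qfact k)"
  proof (intro sum.cong refl)
    fix x assume x: "x \<in> U"
    have "(\<Sum>g\<in>Fb (Suc lo) k (U - {x}). T (cv g (Suc lo) (Suc lo + k))) = qfact k"
      by (rule Suc.IH) (use Suc.prems x in auto)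
    then show "(\<Sum>g\<in>Fb (Suc lo) k (U - {x}). T (card {y\<in>U. x < y}) * T (cv g (Suc lo) (Suc lo + k))) = T (card {y\<in>U. x < y}) * qfact k"
      by (simp add: sum_distrib_left[symmetric])
  qed
  also have "\<dots> = qint (Suc k) * qfact k"
    by (simp add: sum_distrib_right[symmetric] rank_sum Suc.prems)
  also have "\<dots> = qfact (Suc k)" by (simp add: qfact_def)
  finally show ?case .
qed



definition mrg :: "nat \<Rightarrow> (nat \<Rightarrow> nat) \<Rightarrow> nat \<Rightarrow> (nat \<Rightarrow> nat) \<Rightarrow> nat \<Rightarrow> nat" where
  "mrg r f c g = (\<lambda>v. f v + g v + (if v = r then c else 0))"

definition Trip :: "nat \<Rightarrow> nat \<Rightarrow> (nat \<Rightarrow> nat) \<Rightarrow> (nat set \<times> nat \<times> nat set) set" where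
  "Trip n r alpha = {(U, c, V). finite U \<and> finite V \<and> (\<forall>x\<in>U. 1 \<le> x) \<and> (\<forall>x\<in>V. 1 \<le> x)
     \<and> card U = r - 1 \<and> card V = n - r \<and> 1 \<le> c \<and> c \<notin> U \<and> c \<notin> V
     \<and> (\<forall>x. 1 \<le> x \<longrightarrow> of_bool (x \<in> U) + of_bool (x = c) + of_bool (x \<in> V) = alpha x)}"

definition sv :: "nat set \<times> nat \<times> nat set \<Rightarrow> nat" where
  "sv t = (case t of (U, c, V) \<Rightarrow> card {x\<in>U. x < c} + card {y\<in>V. c < y})"

lemma bij_card_filter: "bij_betw f A B \<Longrightarrow> card {i\<in>A. P (f i)} = card {x\<in>B. P x}"
proof -
  assume b: "bij_betw f A B"
  have "card {i\<in>A. P (f i)} = card (f ` {i\<in>A. P (f i)})"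
    by (rule card_image[symmetric]) (use b in \<open>auto simp: bij_betw_def inj_on_def\<close>)
  moreover have "f ` {i\<in>A. P (f i)} = {x\<in>B. P x}" using b unfolding bij_betw_def by auto
  ultimately show ?thesis by simp
qed

lemma bij_card_fiber: "bij_betw f A B \<Longrightarrow> card {i\<in>A. f i = x} = of_bool (x \<in> B)"
proof -
  assume b: "bij_betw f A B"
  have "card {i\<in>A. f i = x} = card {y\<in>B. y = x}" using bij_card_filter[OF b, of "\<lambda>y. y = x"] by simp
  also have "\<dots> = of_bool (x \<in> B)"
  proof (cases "x \<in> B")
    case True
    then have "{y\<in>B. y = x} = {x}" by auto
    then show ?thesis using True by simp
  qed auto
  finally show ?thesis .
qed

lemma cv_split_last:
  "cv f lo (Suc h) = cv f lo h + card {i. lo \<le> i \<and> i < h \<and> f i < f h}"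
proof -
  have e: "{(i, j). lo \<le> i \<and> i < j \<and> j < Suc h \<and> f i < f j} =
     {(i, j). lo \<le> i \<and> i < j \<and> j < h \<and> f i < f j} \<union> (\<lambda>i. (i, h)) ` {i. lo \<le> i \<and> i < h \<and> f i < f h}"
    by (auto simp: less_Suc_eq)
  have f1: "finite {(i, j). lo \<le> i \<and> i < j \<and> j < h \<and> f i < f j}"
    by (rule finite_subset[of _ "{..<h} \<times> {..<h}"]) auto
  have f2: "finite ((\<lambda>i. (i, h)) ` {i. lo \<le> i \<and> i < h \<and> f i < f h})" by simp
  have d: "{(i, j). lo \<le> i \<and> i < j \<and> j < h \<and> f i < f j} \<inter> (\<lambda>i. (i, h)) ` {i. lo \<le> i \<and> i < h \<and> f i < f h} = {}"
    by auto
  show ?thesis unfolding cv_def e card_Un_disjoint[OF f1 f2 d]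
    by (simp add: card_image inj_on_def)
qed

lemma cv_cong: "(\<And>v. lo \<le> v \<Longrightarrow> v < hi \<Longrightarrow> f v = f' v) \<Longrightarrow> cv f lo hi = cv f' lo hi"
  unfolding cv_def by (rule arg_cong[where f=card]) auto

locale twoclq =
  fixes n r :: nat and m :: "nat \<Rightarrow> nat"
  assumes r1: "1 \<le> r" and rn: "r \<le> n - 1"
    and mdef: "\<forall>i. 1 \<le> i \<and> i \<le> n - 1 \<longrightarrow> m i = (if i < r then r else n)"
begin

lemma rlt: "r < n" using r1 rn by simp

lemma edge_iff: "nuio_edge n m i j \<longleftrightarrow> (1 \<le> i \<and> i < j \<and> j \<le> r) \<or> (r \<le> i \<and> i < j \<and> j \<le> n)"
proof (cases "1 \<le> i \<and> i \<le> n - 1")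
  case True
  then have "m i = (if i < r then r else n)" using mdef by simp
  then show ?thesis unfolding nuio_edge_def using True rlt r1 by auto
next
  case False
  then show ?thesis unfolding nuio_edge_def using rlt r1 by auto
qed

lemma asc_eq: "asc n m \<kappa> = cv \<kappa> 1 (Suc r) + cv \<kappa> r (Suc n)"
proof -
  have e: "{(i, j). nuio_edge n m i j \<and> \<kappa> i < \<kappa> j} =
    {(i, j). 1 \<le> i \<and> i < j \<and> j < Suc r \<and> \<kappa> i < \<kappa> j} \<union> {(i, j). r \<le> i \<and> i < j \<and> j < Suc n \<and> \<kappa> i < \<kappa> j}"
    unfolding edge_iff by auto
  have f1: "finite {(i, j). 1 \<le> i \<and> i < j \<and> j < Suc r \<and> \<kappa> i < \<kappa> j}"
    by (rule finite_subset[of _ "{..<Suc r} \<times> {..<Suc r}"]) auto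
  have f2: "finite {(i, j). r \<le> i \<and> i < j \<and> j < Suc n \<and> \<kappa> i < \<kappa> j}"
    by (rule finite_subset[of _ "{..<Suc n} \<times> {..<Suc n}"]) auto
  have d: "{(i, j). 1 \<le> i \<and> i < j \<and> j < Suc r \<and> \<kappa> i < \<kappa> j} \<inter> {(i, j). r \<le> i \<and> i < j \<and> j < Suc n \<and> \<kappa> i < \<kappa> j} = {}"
    by auto
  show ?thesis unfolding asc_def e card_Un_disjoint[OF f1 f2 d] cv_def by simp
qed

lemma domA: "{1..<1 + (r - 1)} = {1..<r}" using r1 by simp
lemma domB: "{Suc r..<Suc r + (n - r)} = {Suc r..n}" using rlt by auto
lemma dom_split: "{1..n} = {1..<r} \<union> {r} \<union> {Suc r..n}" using r1 rlt by auto

abbreviation FA where "FA U \<equiv> Fb 1 (r - 1) U"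
abbreviation FB where "FB V \<equiv> Fb (Suc r) (n - r) V"

lemma FA_bij: "f \<in> FA U \<Longrightarrow> bij_betw f {1..<r} U"
  unfolding Fb_def domA by simp
lemma FA_zero: "f \<in> FA U \<Longrightarrow> v \<notin> {1..<r} \<Longrightarrow> f v = 0"
  unfolding Fb_def domA by simp
lemma FB_bij: "g \<in> FB V \<Longrightarrow> bij_betw g {Suc r..n} V"
  unfolding Fb_def domB by simp
lemma FB_zero: "g \<in> FB V \<Longrightarrow> v \<notin> {Suc r..n} \<Longrightarrow> g v = 0"
  unfolding Fb_def domB by simp

lemma mrg_A: "f \<in> FA U \<Longrightarrow> g \<in> FB V \<Longrightarrow> v \<in> {1..<r} \<Longrightarrow> mrg r f c g v = f v"
  unfolding mrg_def using FB_zero[of g V v] by auto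
lemma mrg_B: "f \<in> FA U \<Longrightarrow> g \<in> FB V \<Longrightarrow> v \<in> {Suc r..n} \<Longrightarrow> mrg r f c g v = g v"
  unfolding mrg_def using FA_zero[of f U v] by auto
lemma mrg_r: "f \<in> FA U \<Longrightarrow> g \<in> FB V \<Longrightarrow> mrg r f c g r = c"
  unfolding mrg_def using FA_zero[of f U r] FB_zero[of g V r] by auto
lemma mrg_out: "f \<in> FA U \<Longrightarrow> g \<in> FB V \<Longrightarrow> v \<notin> {1..n} \<Longrightarrow> mrg r f c g v = 0"
  unfolding mrg_def using FA_zero[of f U v] FB_zero[of g V v] r1 rlt by auto

lemma mrg_fiber:
  assumes f: "f \<in> FA U" and g: "g \<in> FB V"
  shows "card {v\<in>{1..n}. mrg r f c g v = x} = of_bool (x \<in> U) + of_bool (x = c) + of_bool (x \<in> V)"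
proof -
  have e: "{v\<in>{1..n}. mrg r f c g v = x} = {v\<in>{1..<r}. f v = x} \<union> {v\<in>{r}. c = x} \<union> {v\<in>{Suc r..n}. g v = x}"
    unfolding dom_split using mrg_A[OF f g] mrg_B[OF f g] mrg_r[OF f g] by auto
  have "card ({v\<in>{1..<r}. f v = x} \<union> {v\<in>{r}. c = x} \<union> {v\<in>{Suc r..n}. g v = x})
     = card {v\<in>{1..<r}. f v = x} + card {v\<in>{r}. c = x} + card {v\<in>{Suc r..n}. g v = x}"
    by (subst card_Un_disjoint; auto)+
  also have "\<dots> = of_bool (x \<in> U) + of_bool (x = c) + of_bool (x \<in> V)"
    using bij_card_fiber[OF FA_bij[OF f]] bij_card_fiber[OF FB_bij[OF g]] by auto
  finally show ?thesis unfolding e .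
qed

lemma asc_mrg:
  assumes f: "f \<in> FA U" and g: "g \<in> FB V"
  shows "asc n m (mrg r f c g) = cv f 1 (1 + (r - 1)) + cv g (Suc r) (Suc r + (n - r)) + sv (U, c, V)"
proof -
  let ?k = "mrg r f c g"
  have a1: "cv ?k 1 (Suc r) = cv f 1 (1 + (r - 1)) + card {x\<in>U. x < c}"
  proof -
    have "cv ?k 1 (Suc r) = cv ?k 1 r + card {i. 1 \<le> i \<and> i < r \<and> ?k i < ?k r}" by (rule cv_split_last)
    also have "cv ?k 1 r = cv f 1 (1 + (r - 1))"
    proof -
      have "1 + (r - 1) = r" using r1 by simp
      then show ?thesis using mrg_A[OF f g] by (simp only:) (intro cv_cong, auto)
    qed
    also have "{i. 1 \<le> i \<and> i < r \<and> ?k i < ?k r} = {i\<in>{1..<r}. f i < c}"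
      using mrg_A[OF f g] mrg_r[OF f g] by auto
    also have "card {i\<in>{1..<r}. f i < c} = card {x\<in>U. x < c}"
      by (rule bij_card_filter[OF FA_bij[OF f]])
    finally show ?thesis .
  qed
  have a2: "cv ?k r (Suc n) = card {y\<in>V. c < y} + cv g (Suc r) (Suc r + (n - r))"
  proof -
    have "cv ?k r (Suc n) = card {j. r < j \<and> j < Suc n \<and> ?k r < ?k j} + cv ?k (Suc r) (Suc n)"
      by (rule cv_split) (use rlt in simp)
    also have "cv ?k (Suc r) (Suc n) = cv g (Suc r) (Suc r + (n - r))"
    proof -
      have "Suc r + (n - r) = Suc n" using rlt by simp
      then show ?thesis using mrg_B[OF f g] by (simp only:) (intro cv_cong, auto)
    qed
    also have "{j. r < j \<and> j < Suc n \<and> ?k r < ?k j} = {j\<in>{Suc r..n}. c < g j}"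
      using mrg_B[OF f g] mrg_r[OF f g] by auto
    also have "card {j\<in>{Suc r..n}. c < g j} = card {y\<in>V. c < y}"
      by (rule bij_card_filter[OF FB_bij[OF g]])
    finally show ?thesis .
  qed
  show ?thesis unfolding asc_eq a1 a2 sv_def by simp
qed

definition proj :: "(nat \<Rightarrow> nat) \<Rightarrow> nat set \<times> nat \<times> nat set" where
  "proj k = (k ` {1..<r}, k r, k ` {Suc r..n})"

lemma mrg_in:
  assumes t: "(U, c, V) \<in> Trip n r alpha" and f: "f \<in> FA U" and g: "g \<in> FB V"
  shows "mrg r f c g \<in> colorings_of_type n m alpha \<and> proj (mrg r f c g) = (U, c, V)"
proof -
  let ?k = "mrg r f c g"
  have T: "\<forall>x\<in>U. 1 \<le> x" "\<forall>x\<in>V. 1 \<le> x" "1 \<le> c" "c \<notin> U" "c \<notin> V"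
    "\<forall>x. 1 \<le> x \<longrightarrow> of_bool (x \<in> U) + of_bool (x = c) + of_bool (x \<in> V) = alpha x"
    using t unfolding Trip_def by auto
  have bA: "bij_betw f {1..<r} U" and bB: "bij_betw g {Suc r..n} V" using FA_bij[OF f] FB_bij[OF g] .
  have pos: "\<forall>v. v \<in> {1..n} \<longrightarrow> 1 \<le> ?k v"
  proof (intro allI impI)
    fix v assume v: "v \<in> {1..n}"
    then consider "v \<in> {1..<r}" | "v = r" | "v \<in> {Suc r..n}" by (cases "v < r"; cases "v = r"; auto)
    then show "1 \<le> ?k v"
    proof cases
      case 1 then show ?thesis using mrg_A[OF f g] bA T unfolding bij_betw_def by auto
    next
      case 2 then show ?thesis using mrg_r[OF f g] T by auto
    next
      case 3 then show ?thesis using mrg_B[OF f g] bB T unfolding bij_betw_def by auto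
    qed
  qed
  have zero: "\<forall>v. v \<notin> {1..n} \<longrightarrow> ?k v = 0" using mrg_out[OF f g] by auto
  have proper: "\<forall>i j. nuio_edge n m i j \<longrightarrow> ?k i \<noteq> ?k j"
  proof (intro allI impI)
    fix i j assume "nuio_edge n m i j"
    then consider "1 \<le> i" "i < j" "j < r" | "1 \<le> i" "i < j" "j = r" | "r = i" "i < j" "j \<le> n" | "r < i" "i < j" "j \<le> n"
      unfolding edge_iff by linarith
    then show "?k i \<noteq> ?k j"
    proof cases
      case 1
      have ij: "i \<in> {1..<r}" "j \<in> {1..<r}" "i \<noteq> j" using 1 by auto
      have "f i \<noteq> f j" using bA ij unfolding bij_betw_def inj_on_def by blast
      then show ?thesis using mrg_A[OF f g] ij by simp
    next
      case 2
      then have "f i \<in> U" using bA unfolding bij_betw_def by auto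
      then show ?thesis using 2 mrg_A[OF f g, of i] mrg_r[OF f g] T by auto
    next
      case 3
      then have "g j \<in> V" using bB unfolding bij_betw_def by auto
      then show ?thesis using 3 mrg_B[OF f g, of j] mrg_r[OF f g] T by auto
    next
      case 4
      have ij: "i \<in> {Suc r..n}" "j \<in> {Suc r..n}" "i \<noteq> j" using 4 by auto
      have "g i \<noteq> g j" using bB ij unfolding bij_betw_def inj_on_def by blast
      then show ?thesis using mrg_B[OF f g] ij by simp
    qed
  qed
  have tyq: "\<forall>x. 1 \<le> x \<longrightarrow> card {v\<in>{1..n}. ?k v = x} = alpha x"
    using mrg_fiber[OF f g] T by auto
  have "?k \<in> colorings_of_type n m alpha" unfolding colorings_of_type_def using pos zero proper tyq by blast
  moreover have "proj ?k = (U, c, V)"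
  proof -
    have "?k ` {1..<r} = f ` {1..<r}" using mrg_A[OF f g] by (intro image_cong) auto
    moreover have "?k ` {Suc r..n} = g ` {Suc r..n}" using mrg_B[OF f g] by (intro image_cong) auto
    ultimately show ?thesis unfolding proj_def using bA bB mrg_r[OF f g] by (simp add: bij_betw_def)
  qed
  ultimately show ?thesis by simp
qed

lemma decomp:
  assumes k: "k \<in> colorings_of_type n m alpha"
  defines "f \<equiv> (\<lambda>v. if v \<in> {1..<r} then k v else 0)" and "g \<equiv> (\<lambda>v. if v \<in> {Suc r..n} then k v else 0)"
  shows "f \<in> FA (k ` {1..<r}) \<and> g \<in> FB (k ` {Suc r..n}) \<and> k = mrg r f (k r) g \<and> proj k \<in> Trip n r alpha"
proof -
  have K: "\<forall>v. v \<in> {1..n} \<longrightarrow> 1 \<le> k v" "\<forall>v. v \<notin> {1..n} \<longrightarrow> k v = 0"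
    "\<forall>i j. nuio_edge n m i j \<longrightarrow> k i \<noteq> k j" "\<forall>c. 1 \<le> c \<longrightarrow> card {v \<in> {1..n}. k v = c} = alpha c"
    using k unfolding colorings_of_type_def by auto
  have injA: "inj_on k {1..<r}"
  proof (rule inj_onI)
    fix i j assume ij: "i \<in> {1..<r}" "j \<in> {1..<r}" "k i = k j"
    show "i = j"
    proof (rule ccontr)
      assume "i \<noteq> j"
      then have "i < j \<or> j < i" by arith
      then show False
      proof (elim disjE)
        assume "i < j"
        then have "nuio_edge n m i j" unfolding edge_iff using ij by auto
        then show False using K(3) ij(3) by blast
      next
        assume "j < i"
        then have "nuio_edge n m j i" unfolding edge_iff using ij by auto
        then show False using K(3) ij(3) by fastforce
      qed
    qed
  qed
  have injB: "inj_on k {Suc r..n}"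
  proof (rule inj_onI)
    fix i j assume ij: "i \<in> {Suc r..n}" "j \<in> {Suc r..n}" "k i = k j"
    show "i = j"
    proof (rule ccontr)
      assume "i \<noteq> j"
      then have "i < j \<or> j < i" by arith
      then show False
      proof (elim disjE)
        assume "i < j"
        then have "nuio_edge n m i j" unfolding edge_iff using ij by auto
        then show False using K(3) ij(3) by blast
      next
        assume "j < i"
        then have "nuio_edge n m j i" unfolding edge_iff using ij by auto
        then show False using K(3) ij(3) by fastforce
      qed
    qed
  qed
  have fA: "f \<in> FA (k ` {1..<r})"
    unfolding Fb_def domA f_def
  proof (intro CollectI conjI allI impI)
    show "bij_betw (\<lambda>v. if v \<in> {1..<r} then k v else 0) {1..<r} (k ` {1..<r})"
      using injA unfolding bij_betw_def inj_on_def by auto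
  qed auto
  have gB: "g \<in> FB (k ` {Suc r..n})"
    unfolding Fb_def domB g_def
  proof (intro CollectI conjI allI impI)
    show "bij_betw (\<lambda>v. if v \<in> {Suc r..n} then k v else 0) {Suc r..n} (k ` {Suc r..n})"
      using injB unfolding bij_betw_def inj_on_def by auto
  qed auto
  have keq: "k = mrg r f (k r) g"
  proof
    fix v
    show "k v = mrg r f (k r) g v"
      unfolding mrg_def f_def g_def using K(2) r1 rlt by (cases "v \<in> {1..n}") auto
  qed
  have "proj k \<in> Trip n r alpha"
  proof -
    let ?U = "k ` {1..<r}" and ?V = "k ` {Suc r..n}" and ?c = "k r"
    have "card ?U = r - 1" using card_image[OF injA] by simp
    moreover have "card ?V = n - r" using card_image[OF injB] by simp
    moreover have "\<forall>x\<in>?U. 1 \<le> x" "\<forall>x\<in>?V. 1 \<le> x" "1 \<le> ?c" using K(1) r1 rlt by auto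
    moreover have "?c \<notin> ?U"
    proof
      assume "?c \<in> ?U"
      then obtain i where i: "i \<in> {1..<r}" "k i = k r" by auto
      then have "nuio_edge n m i r" unfolding edge_iff by auto
      then show False using K(3) i(2) by blast
    qed
    moreover have "?c \<notin> ?V"
    proof
      assume "?c \<in> ?V"
      then obtain j where j: "j \<in> {Suc r..n}" "k j = k r" by auto
      then have "nuio_edge n m r j" unfolding edge_iff by auto
      then show False using K(3) j(2) by fastforce
    qed
    moreover have "\<forall>x. 1 \<le> x \<longrightarrow> of_bool (x \<in> ?U) + of_bool (x = ?c) + of_bool (x \<in> ?V) = alpha x"
    proof (intro allI impI)
      fix x :: nat assume "1 \<le> x"
      have "card {v\<in>{1..n}. mrg r f (k r) g v = x} = of_bool (x \<in> ?U) + of_bool (x = ?c) + of_bool (x \<in> ?V)"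
        by (rule mrg_fiber[OF fA gB])
      then show "of_bool (x \<in> ?U) + of_bool (x = ?c) + of_bool (x \<in> ?V) = alpha x"
        using K(4) \<open>1 \<le> x\<close> keq by simp
    qed
    ultimately show ?thesis unfolding proj_def Trip_def by auto
  qed
  then show ?thesis using fA gB keq by simp
qed

end


lemma sum_prod3: "(\<Sum>x\<in>A. \<Sum>y\<in>B. a x * b y * (s::'a::comm_semiring_1)) = sum a A * sum b B * s"
proof -
  have "sum a A * sum b B * s = (\<Sum>x\<in>A. \<Sum>y\<in>B. a x * b y) * s" by (simp only: sum_product)
  also have "\<dots> = (\<Sum>x\<in>A. \<Sum>y\<in>B. a x * b y * s)" by (simp only: sum_distrib_right)
  finally show ?thesis by simp
qed

context twoclq begin

lemma coloring_finite:
  assumes fin: "finite {c. alpha c \<noteq> 0}"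
  shows "finite (colorings_of_type n m alpha)"
proof -
  let ?S = "{c. alpha c \<noteq> 0}"
  have "colorings_of_type n m alpha \<subseteq> {k. \<forall>x. (x \<in> {1..n} \<longrightarrow> k x \<in> ?S) \<and> (x \<notin> {1..n} \<longrightarrow> k x = 0)}"
  proof
    fix k assume k: "k \<in> colorings_of_type n m alpha"
    have K: "\<forall>v. v \<in> {1..n} \<longrightarrow> 1 \<le> k v" "\<forall>v. v \<notin> {1..n} \<longrightarrow> k v = 0"
      "\<forall>c. 1 \<le> c \<longrightarrow> card {v \<in> {1..n}. k v = c} = alpha c"
      using k unfolding colorings_of_type_def by auto
    have "k x \<in> ?S" if x: "x \<in> {1..n}" for x
    proof -
      have "x \<in> {v \<in> {1..n}. k v = k x}" using x by simp
      then have c0: "card {v \<in> {1..n}. k v = k x} \<noteq> 0"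
        by (subst card_0_eq) auto
      have "1 \<le> k x" using K(1) x by blast
      then have ea: "alpha (k x) = card {v \<in> {1..n}. k v = k x}" using K(3) by simp
      have "alpha (k x) \<noteq> 0" using c0 unfolding ea[symmetric] .
      then show ?thesis by simp
    qed
    then show "k \<in> {k. \<forall>x. (x \<in> {1..n} \<longrightarrow> k x \<in> ?S) \<and> (x \<notin> {1..n} \<longrightarrow> k x = 0)}" using K(2) by auto
  qed
  moreover have "finite {k. \<forall>x. (x \<in> {1..n} \<longrightarrow> k x \<in> ?S) \<and> (x \<notin> {1..n} \<longrightarrow> k x = 0)}"
    by (rule finite_set_of_finite_funs) (use fin in auto)
  ultimately show ?thesis by (rule finite_subset)
qed

lemma trip_finite:
  assumes fin: "finite {c. alpha c \<noteq> 0}"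
  shows "finite (Trip n r alpha)"
proof -
  let ?S = "{c. alpha c \<noteq> 0}"
  have "Trip n r alpha \<subseteq> Pow ?S \<times> ?S \<times> Pow ?S"
  proof
    fix t assume "t \<in> Trip n r alpha"
    then obtain U c V where t: "t = (U, c, V)" and tt: "(U, c, V) \<in> Trip n r alpha" by (cases t) auto
    have T: "\<forall>x\<in>U. 1 \<le> x" "\<forall>x\<in>V. 1 \<le> x" "1 \<le> c"
      "\<forall>x. 1 \<le> x \<longrightarrow> of_bool (x \<in> U) + of_bool (x = c) + of_bool (x \<in> V) = alpha x"
      using tt unfolding Trip_def by auto
    have "U \<subseteq> ?S" using T(1,4) by force
    moreover have "V \<subseteq> ?S" using T(2,4) by force
    moreover have "c \<in> ?S" using T(3,4) by force
    ultimately show "t \<in> Pow ?S \<times> ?S \<times> Pow ?S" using t by auto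
  qed
  moreover have "finite (Pow ?S \<times> ?S \<times> Pow ?S)" using fin by simp
  ultimately show ?thesis by (rule finite_subset)
qed

lemma fiber_eq:
  assumes t: "(U, c, V) \<in> Trip n r alpha"
  shows "{k \<in> colorings_of_type n m alpha. proj k = (U, c, V)} = (\<lambda>(f, g). mrg r f c g) ` (FA U \<times> FB V)"
proof
  show "{k \<in> colorings_of_type n m alpha. proj k = (U, c, V)} \<subseteq> (\<lambda>(f, g). mrg r f c g) ` (FA U \<times> FB V)"
  proof
    fix k assume k: "k \<in> {k \<in> colorings_of_type n m alpha. proj k = (U, c, V)}"
    define f where "f = (\<lambda>v. if v \<in> {1..<r} then k v else 0)"
    define g where "g = (\<lambda>v. if v \<in> {Suc r..n} then k v else 0)"
    have d: "f \<in> FA (k ` {1..<r}) \<and> g \<in> FB (k ` {Suc r..n}) \<and> k = mrg r f (k r) g"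
      using decomp[of k alpha] k unfolding f_def g_def by auto
    have p: "k ` {1..<r} = U" "k r = c" "k ` {Suc r..n} = V" using k unfolding proj_def by auto
    show "k \<in> (\<lambda>(f, g). mrg r f c g) ` (FA U \<times> FB V)"
      using d p by (intro rev_image_eqI[of "(f, g)"]) auto
  qed
next
  show "(\<lambda>(f, g). mrg r f c g) ` (FA U \<times> FB V) \<subseteq> {k \<in> colorings_of_type n m alpha. proj k = (U, c, V)}"
    using mrg_in[OF t] by auto
qed

lemma mrg_inj: "inj_on (\<lambda>(f, g). mrg r f c g) (FA U \<times> FB V)"
proof (rule inj_onI, clarify)
  fix f g f' g'
  assume f: "f \<in> FA U" and g: "g \<in> FB V" and f': "f' \<in> FA U" and g': "g' \<in> FB V"
    and e: "mrg r f c g = mrg r f' c g'"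
  have "f = f'"
  proof
    fix v show "f v = f' v"
    proof (cases "v \<in> {1..<r}")
      case True
      then show ?thesis using mrg_A[OF f g True, of c] mrg_A[OF f' g' True, of c] e by simp
    next
      case False
      then show ?thesis using FA_zero[OF f] FA_zero[OF f'] by simp
    qed
  qed
  moreover have "g = g'"
  proof
    fix v show "g v = g' v"
    proof (cases "v \<in> {Suc r..n}")
      case True
      then show ?thesis using mrg_B[OF f g True, of c] mrg_B[OF f' g' True, of c] e by simp
    next
      case False
      then show ?thesis using FB_zero[OF g] FB_zero[OF g'] by simp
    qed
  qed
  ultimately show "f = f' \<and> g = g'" by simp
qed

lemma csf_trip:
  assumes fin: "finite {c. alpha c \<noteq> 0}"
  shows "csf_coeff n m alpha = qfact (r - 1) * qfact (n - r) * (\<Sum>t\<in>Trip n r alpha. T (sv t))"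
proof -
  have img: "proj ` colorings_of_type n m alpha \<subseteq> Trip n r alpha" using decomp by auto
  have "csf_coeff n m alpha = (\<Sum>t\<in>Trip n r alpha. \<Sum>k\<in>{k \<in> colorings_of_type n m alpha. proj k = t}. T (asc n m k))"
    unfolding csf_coeff_def
    by (rule sum.group[symmetric, OF coloring_finite[OF fin] trip_finite[OF fin] img])
  also have "\<dots> = (\<Sum>t\<in>Trip n r alpha. qfact (r - 1) * qfact (n - r) * T (sv t))"
  proof (rule sum.cong[OF refl])
    fix t assume tT: "t \<in> Trip n r alpha"
    obtain U c V where tu: "t = (U, c, V)" by (cases t) auto
    have tt: "(U, c, V) \<in> Trip n r alpha" using tT tu by simp
    have cards: "finite U" "card U = r - 1" "finite V" "card V = n - r" using tt unfolding Trip_def by auto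
    have finA: "finite (FA U)" and finB: "finite (FB V)" using cards by (auto simp: Fb_finite)
    have "(\<Sum>k\<in>{k \<in> colorings_of_type n m alpha. proj k = t}. T (asc n m k))
        = (\<Sum>p\<in>FA U \<times> FB V. T (asc n m ((\<lambda>(f, g). mrg r f c g) p)))"
      unfolding tu fiber_eq[OF tt] by (rule sum.reindex[OF mrg_inj, unfolded comp_def])
    also have "\<dots> = (\<Sum>p\<in>FA U \<times> FB V. T (cv (fst p) 1 (1 + (r - 1))) * T (cv (snd p) (Suc r) (Suc r + (n - r))) * T (sv (U, c, V)))"
      by (rule sum.cong[OF refl]) (auto simp: asc_mrg T_mult)
    also have "\<dots> = (\<Sum>f\<in>FA U. \<Sum>g\<in>FB V. T (cv f 1 (1 + (r - 1))) * T (cv g (Suc r) (Suc r + (n - r))) * T (sv (U, c, V)))"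
      by (subst sum.cartesian_product) (simp add: split_def)
    also have "\<dots> = (\<Sum>f\<in>FA U. T (cv f 1 (1 + (r - 1)))) * (\<Sum>g\<in>FB V. T (cv g (Suc r) (Suc r + (n - r)))) * T (sv (U, c, V))"
      by (rule sum_prod3)
    also have "\<dots> = qfact (r - 1) * qfact (n - r) * T (sv t)"
      using perm_sum[OF cards(1,2), of 1] perm_sum[OF cards(3,4), of "Suc r"] tu by simp
    finally show "(\<Sum>k\<in>{k \<in> colorings_of_type n m alpha. proj k = t}. T (asc n m k)) = qfact (r - 1) * qfact (n - r) * T (sv t)" .
  qed
  also have "\<dots> = qfact (r - 1) * qfact (n - r) * (\<Sum>t\<in>Trip n r alpha. T (sv t))"
    by (simp add: sum_distrib_left)
  finally show ?thesis .
qed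

end


lemma of_bool_le: "of_bool P \<le> (1::nat)" by simp

context twoclq begin

definition Dset :: "(nat \<Rightarrow> nat) \<Rightarrow> nat set" where "Dset alpha = {x. alpha x = 2}"
definition Qset :: "(nat \<Rightarrow> nat) \<Rightarrow> nat set" where "Qset alpha = {x. alpha x = 1}"
definition good :: "(nat \<Rightarrow> nat) \<Rightarrow> bool" where
  "good alpha \<longleftrightarrow> (\<forall>x. alpha x \<le> 2) \<and> 2 * card (Dset alpha) + card (Qset alpha) = n
     \<and> card (Dset alpha) \<le> r - 1 \<and> card (Dset alpha) \<le> n - r"

lemma trip_good:
  assumes fin: "finite {c. alpha c \<noteq> 0}" and a0: "alpha 0 = 0" and t: "(U, c, V) \<in> Trip n r alpha"
  shows "good alpha \<and> Dset alpha = U \<inter> V"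
proof -
  have T: "finite U" "finite V" "\<forall>x\<in>U. 1 \<le> x" "\<forall>x\<in>V. 1 \<le> x" "card U = r - 1" "card V = n - r" "1 \<le> c" "c \<notin> U" "c \<notin> V"
    "\<forall>x. 1 \<le> x \<longrightarrow> of_bool (x \<in> U) + of_bool (x = c) + of_bool (x \<in> V) = alpha x"
    using t unfolding Trip_def by auto
  have al: "alpha x = of_bool (x \<in> U) + of_bool (x = c) + of_bool (x \<in> V)" for x
  proof (cases "x = 0")
    case True then show ?thesis using a0 T(3,4,7) by auto
  next
    case False then show ?thesis using T(10) by simp
  qed
  have le2: "\<forall>x. alpha x \<le> 2" using T(8,9) al by (auto simp: of_bool_def)
  have Deq: "Dset alpha = U \<inter> V" unfolding Dset_def using al T(8,9) by (auto simp: of_bool_def split: if_splits)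
  have Qeq: "Qset alpha = insert c ((U - V) \<union> (V - U))" unfolding Qset_def using al T(8,9) by (auto simp: of_bool_def split: if_splits)
  have cU: "card (U \<union> V) + card (U \<inter> V) = card U + card V" using card_Un_Int[OF T(1,2)] by simp
  have cQ: "card (Qset alpha) = Suc (card ((U - V) \<union> (V - U)))" unfolding Qeq using T(1,2,8,9) by (subst card_insert_disjoint) auto
  have cUV: "card (U \<union> V) = card ((U - V) \<union> (V - U)) + card (U \<inter> V)"
  proof -
    have "U \<union> V = ((U - V) \<union> (V - U)) \<union> (U \<inter> V)" by auto
    moreover have "card (((U - V) \<union> (V - U)) \<union> (U \<inter> V)) = card ((U - V) \<union> (V - U)) + card (U \<inter> V)"
      by (rule card_Un_disjoint) (use T(1,2) in auto)
    ultimately show ?thesis by simp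
  qed
  have p1: "card (Dset alpha) \<le> r - 1" unfolding Deq using card_mono[OF T(1) Int_lower1[of U V]] T(5) by simp
  have p2: "card (Dset alpha) \<le> n - r" unfolding Deq using card_mono[OF T(2) Int_lower2[of U V]] T(6) by simp
  have "2 * card (Dset alpha) + card (Qset alpha) = n"
    unfolding Deq cQ using cU cUV T(5,6) rlt r1 by linarith
  then show ?thesis using le2 p1 p2 Deq unfolding good_def by simp
qed

lemma DQ_basic:
  assumes fin: "finite {c. alpha c \<noteq> 0}" and a0: "alpha 0 = 0"
  shows "finite (Dset alpha)" "finite (Qset alpha)" "Dset alpha \<inter> Qset alpha = {}"
    "0 \<notin> Dset alpha" "0 \<notin> Qset alpha"
proof -
  show "finite (Dset alpha)" by (rule finite_subset[OF _ fin]) (auto simp: Dset_def)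
  show "finite (Qset alpha)" by (rule finite_subset[OF _ fin]) (auto simp: Qset_def)
qed (use a0 in \<open>auto simp: Dset_def Qset_def\<close>)

definition phi :: "(nat \<Rightarrow> nat) \<Rightarrow> nat \<times> nat set \<Rightarrow> nat set \<times> nat \<times> nat set" where
  "phi alpha = (\<lambda>(c, A). (Dset alpha \<union> A, c, Dset alpha \<union> (Qset alpha - {c} - A)))"

definition Pairs :: "(nat \<Rightarrow> nat) \<Rightarrow> (nat \<times> nat set) set" where
  "Pairs alpha = (SIGMA c:Qset alpha. {A. A \<subseteq> Qset alpha - {c} \<and> card A = r - 1 - card (Dset alpha)})"

lemma phi_inj:
  assumes fin: "finite {c. alpha c \<noteq> 0}" and a0: "alpha 0 = 0"
  shows "inj_on (phi alpha) (Pairs alpha)"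
proof (rule inj_onI, clarify)
  fix c A c' A'
  assume p: "(c, A) \<in> Pairs alpha" "(c', A') \<in> Pairs alpha" and e: "phi alpha (c, A) = phi alpha (c', A')"
  have "c = c'" using e unfolding phi_def by simp
  moreover have "A = A'"
  proof -
    have "Dset alpha \<union> A = Dset alpha \<union> A'" using e unfolding phi_def by simp
    moreover have "A \<subseteq> Qset alpha" "A' \<subseteq> Qset alpha" using p unfolding Pairs_def by auto
    ultimately show ?thesis using DQ_basic(3)[OF fin a0] by blast
  qed
  ultimately show "c = c' \<and> A = A'" by simp
qed

lemma sv_phi:
  assumes fin: "finite {c. alpha c \<noteq> 0}" and a0: "alpha 0 = 0" and p: "(c, A) \<in> Pairs alpha"
  shows "sv (phi alpha (c, A)) = card (Dset alpha) + st (Qset alpha) c A"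
proof -
  let ?D = "Dset alpha" and ?Q = "Qset alpha"
  have B: "finite ?D" "finite ?Q" "?D \<inter> ?Q = {}" using DQ_basic[OF fin a0] by auto
  have P: "c \<in> ?Q" "A \<subseteq> ?Q - {c}" using p unfolding Pairs_def by auto
  have fA: "finite A" using P B finite_subset by blast
  have cD: "c \<notin> ?D" using P B by blast
  have e1: "card {x\<in>?D \<union> A. x < c} = card {x\<in>?D. x < c} + card {x\<in>A. x < c}"
  proof -
    have "{x\<in>?D \<union> A. x < c} = {x\<in>?D. x < c} \<union> {x\<in>A. x < c}" by auto
    moreover have "card ({x\<in>?D. x < c} \<union> {x\<in>A. x < c}) = card {x\<in>?D. x < c} + card {x\<in>A. x < c}"
      by (rule card_Un_disjoint) (use B fA P in auto)
    ultimately show ?thesis by simp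
  qed
  have e2: "card {y\<in>?D \<union> (?Q - {c} - A). c < y} = card {y\<in>?D. c < y} + card {y\<in>?Q - {c} - A. c < y}"
  proof -
    have "{y\<in>?D \<union> (?Q - {c} - A). c < y} = {y\<in>?D. c < y} \<union> {y\<in>?Q - {c} - A. c < y}" by auto
    moreover have "card ({y\<in>?D. c < y} \<union> {y\<in>?Q - {c} - A. c < y}) = card {y\<in>?D. c < y} + card {y\<in>?Q - {c} - A. c < y}"
      by (rule card_Un_disjoint) (use B in auto)
    ultimately show ?thesis by simp
  qed
  have e3: "card {x\<in>?D. x < c} + card {y\<in>?D. c < y} = card ?D"
  proof -
    have "x < c \<or> c < x" if "x \<in> ?D" for x using cD that by (cases "x = c") auto
    then have "?D = {x\<in>?D. x < c} \<union> {y\<in>?D. c < y}" by auto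
    moreover have "card ({x\<in>?D. x < c} \<union> {y\<in>?D. c < y}) = card {x\<in>?D. x < c} + card {y\<in>?D. c < y}"
      by (rule card_Un_disjoint) (use B in auto)
    ultimately show ?thesis by simp
  qed
  show ?thesis unfolding phi_def sv_def st_def using e1 e2 e3 by simp
qed

lemma trip_eq:
  assumes fin: "finite {c. alpha c \<noteq> 0}" and a0: "alpha 0 = 0" and g: "good alpha"
  shows "Trip n r alpha = phi alpha ` Pairs alpha"
proof
  let ?D = "Dset alpha" and ?Q = "Qset alpha"
  have B: "finite ?D" "finite ?Q" "?D \<inter> ?Q = {}" "0 \<notin> ?D" "0 \<notin> ?Q" using DQ_basic[OF fin a0] by auto
  have G: "\<forall>x. alpha x \<le> 2" "2 * card ?D + card ?Q = n" "card ?D \<le> r - 1" "card ?D \<le> n - r"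
    using g unfolding good_def by auto
  show "Trip n r alpha \<subseteq> phi alpha ` Pairs alpha"
  proof
    fix t assume tT: "t \<in> Trip n r alpha"
    obtain U c V where tu: "t = (U, c, V)" by (cases t) auto
    have tt: "(U, c, V) \<in> Trip n r alpha" using tT tu by simp
    have T: "finite U" "finite V" "\<forall>x\<in>U. 1 \<le> x" "\<forall>x\<in>V. 1 \<le> x" "card U = r - 1" "card V = n - r" "1 \<le> c" "c \<notin> U" "c \<notin> V"
      "\<forall>x. 1 \<le> x \<longrightarrow> of_bool (x \<in> U) + of_bool (x = c) + of_bool (x \<in> V) = alpha x"
      using tt unfolding Trip_def by auto
    have al: "alpha x = of_bool (x \<in> U) + of_bool (x = c) + of_bool (x \<in> V)" for x
    proof (cases "x = 0")
      case True then show ?thesis using a0 T(3,4,7) by auto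
    next
      case False then show ?thesis using T(10) by simp
    qed
    have Deq: "?D = U \<inter> V" using trip_good[OF fin a0 tt] by simp
    define A where "A = U - ?D"
    have cQ: "c \<in> ?Q" unfolding Qset_def using al T(8,9) by simp
    have AQ: "A \<subseteq> ?Q - {c}" unfolding A_def Deq Qset_def using al T(8,9) by (auto simp: of_bool_def)
    have cA: "card A = r - 1 - card ?D" unfolding A_def using T(1,5) Deq by (simp add: card_Diff_subset)
    have Ueq: "U = ?D \<union> A" unfolding A_def Deq by auto
    have Veq: "V = ?D \<union> (?Q - {c} - A)"
      unfolding A_def Deq Qset_def using al T(8,9) by (auto simp: of_bool_def split: if_splits)
    show "t \<in> phi alpha ` Pairs alpha"
      using cQ AQ cA Ueq Veq tu unfolding Pairs_def phi_def
      by (intro rev_image_eqI[of "(c, A)"]) auto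
  qed
next
  let ?D = "Dset alpha" and ?Q = "Qset alpha"
  have B: "finite ?D" "finite ?Q" "?D \<inter> ?Q = {}" "0 \<notin> ?D" "0 \<notin> ?Q" using DQ_basic[OF fin a0] by auto
  have G: "\<forall>x. alpha x \<le> 2" "2 * card ?D + card ?Q = n" "card ?D \<le> r - 1" "card ?D \<le> n - r"
    using g unfolding good_def by auto
  show "phi alpha ` Pairs alpha \<subseteq> Trip n r alpha"
  proof
    fix t assume "t \<in> phi alpha ` Pairs alpha"
    then obtain c A where p: "(c, A) \<in> Pairs alpha" and tu: "t = phi alpha (c, A)" by auto
    have P: "c \<in> ?Q" "A \<subseteq> ?Q - {c}" "card A = r - 1 - card ?D" using p unfolding Pairs_def by auto
    have fA: "finite A" using P B finite_subset by blast
    have dA: "?D \<inter> A = {}" using P B by blast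
    have c1: "card (?D \<union> A) = r - 1"
      using card_Un_disjoint[OF B(1) fA dA] P G(3) by simp
    have fR: "finite (?Q - {c} - A)" using B by simp
    have cR: "card (?Q - {c} - A) = card ?Q - 1 - card A"
    proof -
      have "card (?Q - {c} - A) = card (?Q - {c}) - card A" using P(2) fA by (simp add: card_Diff_subset)
      then show ?thesis using P(1) B(2) by simp
    qed
    have c2: "card (?D \<union> (?Q - {c} - A)) = n - r"
    proof -
      have "card (?D \<union> (?Q - {c} - A)) = card ?D + card (?Q - {c} - A)"
        by (rule card_Un_disjoint) (use B in auto)
      then show ?thesis using cR P(3) G(2,3,4) rlt r1 by linarith
    qed
    have mult: "of_bool (x \<in> ?D \<union> A) + of_bool (x = c) + of_bool (x \<in> ?D \<union> (?Q - {c} - A)) = alpha x" for x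
    proof -
      have "alpha x \<le> 2" using G(1) by blast
      then have "alpha x = 0 \<or> alpha x = 1 \<or> alpha x = 2" by linarith
      then show ?thesis
      proof (elim disjE)
        assume 1: "alpha x = 0"
        then have "x \<notin> ?D" "x \<notin> ?Q" unfolding Dset_def Qset_def by auto
        then show ?thesis using 1 P by auto
      next
        assume 2: "alpha x = 1"
        then have "x \<notin> ?D" "x \<in> ?Q" unfolding Dset_def Qset_def by auto
        then show ?thesis using 2 P by (auto simp: of_bool_def)
      next
        assume 3: "alpha x = 2"
        then have "x \<in> ?D" "x \<notin> ?Q" unfolding Dset_def Qset_def by auto
        then show ?thesis using 3 P by (auto simp: of_bool_def)
      qed
    qed
    have nz: "1 \<le> x" if "x \<in> ?D \<union> ?Q" for x using B(4,5) that by (cases x) auto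
    have pos: "\<forall>x\<in>?D \<union> A. 1 \<le> x" "\<forall>x\<in>?D \<union> (?Q - {c} - A). 1 \<le> x" "1 \<le> c"
      using P nz by blast+
    have cn: "c \<notin> ?D \<union> A" "c \<notin> ?D \<union> (?Q - {c} - A)" using B P by auto
    show "t \<in> Trip n r alpha" unfolding tu phi_def Trip_def
      using fA B c1 c2 mult pos cn by auto
  qed
qed

lemma trip_sum:
  assumes fin: "finite {c. alpha c \<noteq> 0}" and a0: "alpha 0 = 0"
  shows "(\<Sum>t\<in>Trip n r alpha. T (sv t)) =
     (if good alpha then T (card (Dset alpha)) * G (Qset alpha) (r - 1 - card (Dset alpha)) else 0)"
proof (cases "good alpha")
  case False
  have "Trip n r alpha = {}"
  proof (rule ccontr)
    assume "Trip n r alpha \<noteq> {}"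
    then obtain U c V where "(U, c, V) \<in> Trip n r alpha" by auto
    then show False using trip_good[OF fin a0] False by blast
  qed
  then show ?thesis using False by simp
next
  case True
  have "(\<Sum>t\<in>Trip n r alpha. T (sv t)) = (\<Sum>p\<in>Pairs alpha. T (sv (phi alpha p)))"
    unfolding trip_eq[OF fin a0 True] by (rule sum.reindex[OF phi_inj[OF fin a0], unfolded comp_def])
  also have "\<dots> = (\<Sum>p\<in>Pairs alpha. T (card (Dset alpha)) * T (st (Qset alpha) (fst p) (snd p)))"
    by (rule sum.cong[OF refl]) (auto simp: sv_phi[OF fin a0] T_mult)
  also have "\<dots> = T (card (Dset alpha)) * G (Qset alpha) (r - 1 - card (Dset alpha))"
  proof -
    have fQ: "finite (Qset alpha)" using DQ_basic[OF fin a0] by simp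
    have "(\<Sum>p\<in>Pairs alpha. T (st (Qset alpha) (fst p) (snd p))) = G (Qset alpha) (r - 1 - card (Dset alpha))"
      unfolding Pairs_def G_def by (subst sum.Sigma) (use fQ in \<open>auto simp: split_def\<close>)
    then show ?thesis by (simp add: sum_distrib_left[symmetric])
  qed
  finally show ?thesis using True by simp
qed

end


context twoclq begin

definition Eset :: "nat \<Rightarrow> (nat \<Rightarrow> nat) \<Rightarrow> nat set list set" where
  "Eset l alpha = {Ss :: nat set list. length Ss = length [n - l, l] \<and>
      (\<forall>k < length [n - l, l]. finite (Ss ! k) \<and> Ss ! k \<subseteq> {1..} \<and> card (Ss ! k) = [n - l, l] ! k) \<and>
      (\<forall>c. 1 \<le> c \<longrightarrow> length (filter (\<lambda>S. c \<in> S) Ss) = alpha c)}"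

lemma e_coeff_Eset: "e_coeff [n - l, l] alpha = card (Eset l alpha)"
  unfolding e_coeff_def Eset_def by simp

lemma mem_Eset: "Ss \<in> Eset l alpha \<longleftrightarrow> (\<exists>S1 S2. Ss = [S1, S2] \<and> finite S1 \<and> finite S2 \<and> S1 \<subseteq> {1..} \<and> S2 \<subseteq> {1..}
   \<and> card S1 = n - l \<and> card S2 = l \<and> (\<forall>c. 1 \<le> c \<longrightarrow> of_bool (c \<in> S1) + of_bool (c \<in> S2) = alpha c))"
proof
  assume "Ss \<in> Eset l alpha"
  then have h: "length Ss = 2" "\<forall>k < 2. finite (Ss ! k) \<and> Ss ! k \<subseteq> {1..} \<and> card (Ss ! k) = [n - l, l] ! k"
    "\<forall>c. 1 \<le> c \<longrightarrow> length (filter (\<lambda>S. c \<in> S) Ss) = alpha c" unfolding Eset_def by auto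
  obtain S1 S2 where ss: "Ss = [S1, S2]" using h(1)
    by (metis (no_types, lifting) length_0_conv length_Suc_conv numeral_2_eq_2)
  have h0: "finite (Ss ! 0) \<and> Ss ! 0 \<subseteq> {1..} \<and> card (Ss ! 0) = [n - l, l] ! 0" using h(2) by simp
  have h1: "finite (Ss ! 1) \<and> Ss ! 1 \<subseteq> {1..} \<and> card (Ss ! 1) = [n - l, l] ! 1" using h(2) by simp
  have "finite S1" "S1 \<subseteq> {1..}" "card S1 = n - l" using h0 ss by auto
  moreover have "finite S2" "S2 \<subseteq> {1..}" "card S2 = l" using h1 ss by auto
  moreover have "\<forall>c. 1 \<le> c \<longrightarrow> of_bool (c \<in> S1) + of_bool (c \<in> S2) = alpha c" using h(3) ss by auto
  ultimately show "\<exists>S1 S2. Ss = [S1, S2] \<and> finite S1 \<and> finite S2 \<and> S1 \<subseteq> {1..} \<and> S2 \<subseteq> {1..}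
   \<and> card S1 = n - l \<and> card S2 = l \<and> (\<forall>c. 1 \<le> c \<longrightarrow> of_bool (c \<in> S1) + of_bool (c \<in> S2) = alpha c)"
    using ss by blast
next
  assume "\<exists>S1 S2. Ss = [S1, S2] \<and> finite S1 \<and> finite S2 \<and> S1 \<subseteq> {1..} \<and> S2 \<subseteq> {1..}
   \<and> card S1 = n - l \<and> card S2 = l \<and> (\<forall>c. 1 \<le> c \<longrightarrow> of_bool (c \<in> S1) + of_bool (c \<in> S2) = alpha c)"
  then obtain S1 S2 where h: "Ss = [S1, S2]" "finite S1" "finite S2" "S1 \<subseteq> {1..}" "S2 \<subseteq> {1..}"
   "card S1 = n - l" "card S2 = l" "\<forall>c. 1 \<le> c \<longrightarrow> of_bool (c \<in> S1) + of_bool (c \<in> S2) = alpha c" by blast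
  have "\<forall>k < length [n - l, l]. finite (Ss ! k) \<and> Ss ! k \<subseteq> {1..} \<and> card (Ss ! k) = [n - l, l] ! k"
  proof (intro allI impI)
    fix k assume "k < length [n - l, l]"
    then have "k = 0 \<or> k = 1" by auto
    then show "finite (Ss ! k) \<and> Ss ! k \<subseteq> {1..} \<and> card (Ss ! k) = [n - l, l] ! k" using h by auto
  qed
  moreover have "\<forall>c. 1 \<le> c \<longrightarrow> length (filter (\<lambda>S. c \<in> S) Ss) = alpha c" using h(1,8) by auto
  ultimately show "Ss \<in> Eset l alpha" unfolding Eset_def using h(1) by simp
qed

lemma Eset_good:
  assumes fin: "finite {c. alpha c \<noteq> 0}" and a0: "alpha 0 = 0" and ln: "l \<le> n" and e: "Ss \<in> Eset l alpha"
  shows "(\<forall>x. alpha x \<le> 2) \<and> 2 * card (Dset alpha) + card (Qset alpha) = n \<and> card (Dset alpha) \<le> l"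
proof -
  obtain S1 S2 where h: "Ss = [S1, S2]" "finite S1" "finite S2" "S1 \<subseteq> {1..}" "S2 \<subseteq> {1..}"
   "card S1 = n - l" "card S2 = l" "\<forall>c. 1 \<le> c \<longrightarrow> of_bool (c \<in> S1) + of_bool (c \<in> S2) = alpha c"
    using e unfolding mem_Eset by blast
  have al: "alpha x = of_bool (x \<in> S1) + of_bool (x \<in> S2)" for x
  proof (cases "x = 0")
    case True then show ?thesis using a0 h(4,5) by auto
  next
    case False then show ?thesis using h(8) by simp
  qed
  have le2: "\<forall>x. alpha x \<le> 2" using al by (auto simp: of_bool_def)
  have Deq: "Dset alpha = S1 \<inter> S2" unfolding Dset_def using al by (auto simp: of_bool_def split: if_splits)
  have Qeq: "Qset alpha = (S1 - S2) \<union> (S2 - S1)" unfolding Qset_def using al by (auto simp: of_bool_def split: if_splits)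
  have cU: "card (S1 \<union> S2) + card (S1 \<inter> S2) = card S1 + card S2" using card_Un_Int[OF h(2,3)] by simp
  have cUV: "card (S1 \<union> S2) = card ((S1 - S2) \<union> (S2 - S1)) + card (S1 \<inter> S2)"
  proof -
    have "S1 \<union> S2 = ((S1 - S2) \<union> (S2 - S1)) \<union> (S1 \<inter> S2)" by auto
    moreover have "card (((S1 - S2) \<union> (S2 - S1)) \<union> (S1 \<inter> S2)) = card ((S1 - S2) \<union> (S2 - S1)) + card (S1 \<inter> S2)"
      by (rule card_Un_disjoint) (use h(2,3) in auto)
    ultimately show ?thesis by simp
  qed
  have p: "card (Dset alpha) \<le> l" unfolding Deq using card_mono[OF h(3) Int_lower2[of S1 S2]] h(7) by simp
  have "2 * card (Dset alpha) + card (Qset alpha) = n" unfolding Deq Qeq using cU cUV h(6,7) ln by linarith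
  then show ?thesis using le2 p by simp
qed

lemma Eset_eq:
  assumes fin: "finite {c. alpha c \<noteq> 0}" and a0: "alpha 0 = 0" and ln: "l \<le> n"
    and g: "\<forall>x. alpha x \<le> 2" "2 * card (Dset alpha) + card (Qset alpha) = n" and pl: "card (Dset alpha) \<le> l"
  shows "Eset l alpha = (\<lambda>J. [Dset alpha \<union> (Qset alpha - J), Dset alpha \<union> J]) ` {J. J \<subseteq> Qset alpha \<and> card J = l - card (Dset alpha)}"
proof
  let ?D = "Dset alpha" and ?Q = "Qset alpha"
  have B: "finite ?D" "finite ?Q" "?D \<inter> ?Q = {}" "0 \<notin> ?D" "0 \<notin> ?Q" using DQ_basic[OF fin a0] by auto
  show "Eset l alpha \<subseteq> (\<lambda>J. [?D \<union> (?Q - J), ?D \<union> J]) ` {J. J \<subseteq> ?Q \<and> card J = l - card ?D}"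
  proof
    fix Ss assume e: "Ss \<in> Eset l alpha"
    obtain S1 S2 where h: "Ss = [S1, S2]" "finite S1" "finite S2" "S1 \<subseteq> {1..}" "S2 \<subseteq> {1..}"
     "card S1 = n - l" "card S2 = l" "\<forall>c. 1 \<le> c \<longrightarrow> of_bool (c \<in> S1) + of_bool (c \<in> S2) = alpha c"
      using e unfolding mem_Eset by blast
    have al: "alpha x = of_bool (x \<in> S1) + of_bool (x \<in> S2)" for x
    proof (cases "x = 0")
      case True then show ?thesis using a0 h(4,5) by auto
    next
      case False then show ?thesis using h(8) by simp
    qed
    have Deq: "?D = S1 \<inter> S2" unfolding Dset_def using al by (auto simp: of_bool_def split: if_splits)
    define J where "J = S2 - ?D"
    have JQ: "J \<subseteq> ?Q" unfolding J_def Deq Qset_def using al by (auto simp: of_bool_def)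
    have cJ: "card J = l - card ?D" unfolding J_def using h(3,7) Deq by (simp add: card_Diff_subset)
    have S2eq: "S2 = ?D \<union> J" unfolding J_def Deq by auto
    have S1eq: "S1 = ?D \<union> (?Q - J)" unfolding J_def Deq Qset_def using al by (auto simp: of_bool_def split: if_splits)
    show "Ss \<in> (\<lambda>J. [?D \<union> (?Q - J), ?D \<union> J]) ` {J. J \<subseteq> ?Q \<and> card J = l - card ?D}"
      using JQ cJ S1eq S2eq h(1) by (intro rev_image_eqI[of J]) auto
  qed
next
  let ?D = "Dset alpha" and ?Q = "Qset alpha"
  have B: "finite ?D" "finite ?Q" "?D \<inter> ?Q = {}" "0 \<notin> ?D" "0 \<notin> ?Q" using DQ_basic[OF fin a0] by auto
  show "(\<lambda>J. [?D \<union> (?Q - J), ?D \<union> J]) ` {J. J \<subseteq> ?Q \<and> card J = l - card ?D} \<subseteq> Eset l alpha"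
  proof
    fix Ss assume "Ss \<in> (\<lambda>J. [?D \<union> (?Q - J), ?D \<union> J]) ` {J. J \<subseteq> ?Q \<and> card J = l - card ?D}"
    then obtain J where J: "J \<subseteq> ?Q" "card J = l - card ?D" and ss: "Ss = [?D \<union> (?Q - J), ?D \<union> J]" by auto
    have fJ: "finite J" using J B finite_subset by blast
    have dJ: "?D \<inter> J = {}" using J B by blast
    have c2: "card (?D \<union> J) = l" using card_Un_disjoint[OF B(1) fJ dJ] J pl by simp
    have cJq: "card J \<le> card ?Q" using card_mono[OF B(2) J(1)] .
    have c1: "card (?D \<union> (?Q - J)) = n - l"
    proof -
      have "card (?D \<union> (?Q - J)) = card ?D + card (?Q - J)"
        by (rule card_Un_disjoint) (use B in auto)
      moreover have "card (?Q - J) = card ?Q - card J" using J(1) fJ by (simp add: card_Diff_subset)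
      ultimately show ?thesis using J(2) cJq g(2) pl by linarith
    qed
    have nz: "1 \<le> x" if "x \<in> ?D \<union> ?Q" for x using B(4,5) that by (cases x) auto
    have mult: "of_bool (x \<in> ?D \<union> (?Q - J)) + of_bool (x \<in> ?D \<union> J) = alpha x" for x
    proof -
      have "alpha x \<le> 2" using g(1) by blast
      then have "alpha x = 0 \<or> alpha x = 1 \<or> alpha x = 2" by linarith
      then show ?thesis
      proof (elim disjE)
        assume 1: "alpha x = 0"
        then have "x \<notin> ?D" "x \<notin> ?Q" unfolding Dset_def Qset_def by auto
        then show ?thesis using 1 J by auto
      next
        assume 2: "alpha x = 1"
        then have "x \<notin> ?D" "x \<in> ?Q" unfolding Dset_def Qset_def by auto
        then show ?thesis using 2 J by (auto simp: of_bool_def)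
      next
        assume 3: "alpha x = 2"
        then have "x \<in> ?D" "x \<notin> ?Q" unfolding Dset_def Qset_def by auto
        then show ?thesis using 3 J by (auto simp: of_bool_def)
      qed
    qed
    have sub: "?D \<union> (?Q - J) \<subseteq> {1..}" "?D \<union> J \<subseteq> {1..}" using nz J by auto
    show "Ss \<in> Eset l alpha" unfolding mem_Eset using ss B fJ c1 c2 mult sub by auto
  qed
qed

lemma e_coeff_val:
  assumes fin: "finite {c. alpha c \<noteq> 0}" and a0: "alpha 0 = 0" and ln: "l \<le> n"
  shows "e_coeff [n - l, l] alpha = (if (\<forall>x. alpha x \<le> 2) \<and> 2 * card (Dset alpha) + card (Qset alpha) = n
      \<and> card (Dset alpha) \<le> l then card (Qset alpha) choose (l - card (Dset alpha)) else 0)"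
proof (cases "(\<forall>x. alpha x \<le> 2) \<and> 2 * card (Dset alpha) + card (Qset alpha) = n \<and> card (Dset alpha) \<le> l")
  case False
  then have emp: "Eset l alpha = {}" using Eset_good[OF fin a0 ln] by blast
  show ?thesis by (subst if_not_P[OF False]) (simp add: e_coeff_Eset emp)
next
  case True
  let ?D = "Dset alpha" and ?Q = "Qset alpha"
  have B: "finite ?D" "finite ?Q" "?D \<inter> ?Q = {}" using DQ_basic[OF fin a0] by auto
  have inj: "inj_on (\<lambda>J. [?D \<union> (?Q - J), ?D \<union> J]) {J. J \<subseteq> ?Q \<and> card J = l - card ?D}"
  proof (rule inj_onI)
    fix J J' assume "J \<in> {J. J \<subseteq> ?Q \<and> card J = l - card ?D}" "J' \<in> {J. J \<subseteq> ?Q \<and> card J = l - card ?D}"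
      and e: "[?D \<union> (?Q - J), ?D \<union> J] = [?D \<union> (?Q - J'), ?D \<union> J']"
    then have "J \<subseteq> ?Q" "J' \<subseteq> ?Q" "?D \<union> J = ?D \<union> J'" by auto
    then show "J = J'" using B(3) by blast
  qed
  have "e_coeff [n - l, l] alpha = card {J. J \<subseteq> ?Q \<and> card J = l - card ?D}"
    unfolding e_coeff_Eset Eset_eq[OF fin a0 ln True[THEN conjunct1] True[THEN conjunct2, THEN conjunct1] True[THEN conjunct2, THEN conjunct2]]
    by (rule card_image[OF inj])
  also have "\<dots> = card ?Q choose (l - card ?D)" by (rule n_subsets[OF B(2)])
  finally show ?thesis using True by simp
qed

end


context twoclq begin

lemma rhs_sum:
  assumes fin: "finite {c. alpha c \<noteq> 0}" and a0: "alpha 0 = 0"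
  shows "(\<Sum>l = 0..min (n - r) (r - 1). T l * qfact (n - r) * qfact (r - 1) * qint (n - 2 * l)
          * of_nat (e_coeff [n - l, l] alpha))
    = qfact (r - 1) * qfact (n - r) * (if good alpha then T (card (Dset alpha)) * Hf (card (Qset alpha)) (r - 1 - card (Dset alpha)) else 0)"
proof -
  let ?M = "min (n - r) (r - 1)" and ?p = "card (Dset alpha)" and ?q = "card (Qset alpha)"
  let ?f = "\<lambda>l. T l * qfact (n - r) * qfact (r - 1) * qint (n - 2 * l) * of_nat (e_coeff [n - l, l] alpha)"
  have lnM: "l \<le> n" if "l \<in> {0..?M}" for l using that rlt by auto
  show ?thesis
  proof (cases "good alpha")
    case False
    have z0: "?f l = 0" if l: "l \<in> {0..?M}" for l
    proof -
      have "e_coeff [n - l, l] alpha = 0"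
      proof (rule ccontr)
        assume "e_coeff [n - l, l] alpha \<noteq> 0"
        then have "(\<forall>x. alpha x \<le> 2) \<and> 2 * ?p + ?q = n \<and> ?p \<le> l"
          using e_coeff_val[OF fin a0 lnM[OF l]] by (auto split: if_splits)
        then have "good alpha" unfolding good_def using l by auto
        then show False using False by simp
      qed
      then show ?thesis by simp
    qed
    have "(\<Sum>l = 0..?M. ?f l) = 0" by (rule sum.neutral) (use z0 in blast)
    then show ?thesis using False by simp
  next
    case True
    have G: "\<forall>x. alpha x \<le> 2" "2 * ?p + ?q = n" "?p \<le> r - 1" "?p \<le> n - r"
      using True unfolding good_def by auto
    have pM: "?p \<le> ?M" using G by simp
    have z: "?f l = 0" if "l \<in> {0..<?p}" for l
    proof -
      have "l \<le> n" using that G(4) rlt by simp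
      then have "e_coeff [n - l, l] alpha = 0" using e_coeff_val[OF fin a0, of l] that by simp
      then show ?thesis by simp
    qed
    have "(\<Sum>l = 0..?M. ?f l) = (\<Sum>l\<in>{0..<?p} \<union> {?p..?M}. ?f l)"
      using pM by (intro sum.cong) auto
    also have "\<dots> = (\<Sum>l\<in>{0..<?p}. ?f l) + (\<Sum>l = ?p..?M. ?f l)"
      by (rule sum.union_disjoint) auto
    also have "(\<Sum>l\<in>{0..<?p}. ?f l) = 0" by (rule sum.neutral) (use z in blast)
    also have "(\<Sum>l = ?p..?M. ?f l) = (\<Sum>j = 0..?M - ?p. ?f (j + ?p))"
      using sum.shift_bounds_cl_nat_ivl[of ?f 0 ?p "?M - ?p"] pM by simp
    also have "\<dots> = (\<Sum>j = 0..?M - ?p. qfact (r - 1) * qfact (n - r) * T ?p * (T j * qint (?q - 2 * j) * of_nat (?q choose j)))"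
    proof (rule sum.cong[OF refl])
      fix j assume j: "j \<in> {0..?M - ?p}"
      have j1: "j \<le> ?M - ?p" using j by simp
      have M1: "?M \<le> n - r" by simp
      have ln: "j + ?p \<le> n" using j1 M1 pM rlt by linarith
      have e: "e_coeff [n - (j + ?p), j + ?p] alpha = ?q choose j"
        using e_coeff_val[OF fin a0 ln] G by simp
      have nn: "n - 2 * (j + ?p) = ?q - 2 * j" using G(2) by simp
      show "?f (j + ?p) = qfact (r - 1) * qfact (n - r) * T ?p * (T j * qint (?q - 2 * j) * of_nat (?q choose j))"
        unfolding e nn by (simp add: T_mult[symmetric] algebra_simps)
    qed
    also have "\<dots> = qfact (r - 1) * qfact (n - r) * T ?p * (\<Sum>j = 0..?M - ?p. T j * qint (?q - 2 * j) * of_nat (?q choose j))"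
      by (simp add: sum_distrib_left)
    also have "(\<Sum>j = 0..?M - ?p. T j * qint (?q - 2 * j) * of_nat (?q choose j)) = Hf ?q (r - 1 - ?p)"
    proof -
      have a: "r - 1 - ?p < ?q" using G(2,3,4) rlt r1 by arith
      have q1: "?q - 1 - (r - 1 - ?p) = n - r - ?p" using G(2,3,4) rlt r1 by arith
      have b: "min (r - 1 - ?p) (?q - 1 - (r - 1 - ?p)) + 1 = Suc (?M - ?p)"
        unfolding q1 by (simp add: min_diff min.commute)
      have "Hf ?q (r - 1 - ?p) = Sm ?q (Suc (?M - ?p))" unfolding Hf_def using a b by simp
      also have "\<dots> = (\<Sum>j = 0..?M - ?p. T j * qint (?q - 2 * j) * of_nat (?q choose j))"
        unfolding Sm_def by (simp add: lessThan_Suc_atMost atLeast0AtMost)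
      finally show ?thesis by simp
    qed
    finally show ?thesis using True by (simp add: algebra_simps)
  qed
qed

end

theorem corollary4p4:
  fixes n r :: nat and m :: "nat \<Rightarrow> nat"
  assumes "1 \<le> r" and "r \<le> n - 1"
    and "\<forall>i. 1 \<le> i \<and> i \<le> n - 1 \<longrightarrow> m i = (if i < r then r else n)"
  shows "\<forall>alpha :: nat \<Rightarrow> nat. finite {c. alpha c \<noteq> 0} \<and> alpha 0 = 0 \<longrightarrow>
    csf_coeff n m alpha =
      (\<Sum>l = 0..min (n - r) (r - 1).
          monom 1 l * qfact (n - r) * qfact (r - 1) * qint (n - 2 * l)
          * of_nat (e_coeff [n - l, l] alpha))"
proof (intro allI impI)
  fix alpha :: "nat \<Rightarrow> nat"
  assume h: "finite {c. alpha c \<noteq> 0} \<and> alpha 0 = 0"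
  interpret twoclq n r m using assms by unfold_locales
  have fQ: "finite (Qset alpha)" using DQ_basic h by auto
  show "csf_coeff n m alpha =
      (\<Sum>l = 0..min (n - r) (r - 1).
          monom 1 l * qfact (n - r) * qfact (r - 1) * qint (n - 2 * l)
          * of_nat (e_coeff [n - l, l] alpha))"
    unfolding csf_trip[OF h[THEN conjunct1]] trip_sum[OF h[THEN conjunct1] h[THEN conjunct2]]
      rhs_sum[OF h[THEN conjunct1] h[THEN conjunct2]] G_Hf[OF fQ] by simp
qed


end
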